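(* Let $p>1$, $s\ge r\ge2$ and $0<\varepsilon<1$. Let $Q$ be an $s$-vertex $r$-graph and let $\mathcal P$ be a hereditary property of $r$-graphs with $\pi(Q,\mathcal P)>0$, and let $0\le\varepsilon'<\varepsilon\,\pi(Q,\mathcal P)/(s!(s-1))$. Then there is $N$ such that for every $n\ge N$ the following holds: if $H_n\in\mathcal P_n$ satisfies $\lambda^{(p)}(Q,H_n)=\lambda^{(p)}(Q,\mathcal P_n)$ and $\mathbf x$ is a principal $Q$-eigenvector of $H_n$ with $(\mathbf x_{\min})^p\ge(1-\varepsilon')/n$, then $$\delta_Q(H_n)\ge(1-\varepsilon)\,\pi(Q,\mathcal P)\binom{n}{s-1}.$$
   Context: An $r$-graph ($r\ge 2$) is a finite hypergraph all of whose edges have exactly $r$ vertices. For $I\subseteq V(H)$, $H[I]$ denotes the induced subhypergraph on $I$. For an $s$-vertex $r$-graph $Q$ and an $r$-graph $H$, $\mathcal N(Q,H)$ is the number of (not necessarily induced) subgraphs of $H$ isomorphic to $Q$. For an $n$-vertex $r$-graph $H$ with vertex set $[n]$ and $\mathbf x\in\mathbb R^n$, $P_{Q,H}(\mathbf x)=s!\sum_{\{i_1,\dots,i_s\}\in\binom{[n]}{s}}\mathcal N(Q,H[\{i_1,\dots,i_s\}])\,x_{i_1}\cdots x_{i_s}$, and for $p\ge1$, $\lambda^{(p)}(Q,H)=\max_{\|\mathbf x\|_p=1}P_{Q,H}(\mathbf x)$. A principal $Q$-eigenvector of $H$ is a nonnegative vector $\mathbf x$ with $\|\mathbf x\|_p=1$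 and $P_{Q,H}(\mathbf x)=\lambda^{(p)}(Q,H)$; $\mathbf x_{\min}$ is its smallest entry. The $Q$-degree of a vertex $v$ is $d_{Q,H}(v)=\sum\mathcal N(Q,H[I])$ over all $s$-subsets $I\subseteq V(H)$ containing $v$, and $\delta_Q(H)$ is the minimum $Q$-degree. A hereditary property $\mathcal P$ of $r$-graphs is a family of $r$-graphs closed under isomorphism and under taking induced subgraphs; as a standing assumption, whenever $H\in\mathcal P$, the disjoint union of $H$ with an isolated vertex is also in $\mathcal P$. $\mathcal P_n$ is the set of members with $n$ vertices; $\lambda^{(p)}(Q,\mathcal P_n)=\max\{\lambda^{(p)}(Q,H):H\in\mathcal P_n\}$; $ex(Q,\mathcal P_n)=\max\{\mathcal N(Q,H):H\in\mathcal P_n\}$ and $\pi(Q,\mathcal P)=\lim_{n\to\infty}ex(Q,\mathcal P_n)/\binom ns$ (this limit exists). *)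

theory Defs
  imports Complex_Main
begin

type_synonym hgraph = "nat set \<times> nat set set"

definition is_rgraph :: "nat \<Rightarrow> hgraph \<Rightarrow> bool" where
  "is_rgraph r H \<longleftrightarrow> finite (fst H) \<and> (\<forall>e\<in>snd H. e \<subseteq> fst H \<and> card e = r)"

definition hg_iso :: "hgraph \<Rightarrow> hgraph \<Rightarrow> bool" where
  "hg_iso H G \<longleftrightarrow> (\<exists>f. bij_betw f (fst H) (fst G) \<and> snd G = (\<lambda>e. f ` e) ` snd H)"

definition induced :: "hgraph \<Rightarrow> nat set \<Rightarrow> hgraph" where
  "induced H I = (I, {e \<in> snd H. e \<subseteq> I})"

definition copies :: "hgraph \<Rightarrow> hgraph \<Rightarrow> nat" where
  "copies Q H = card {G. fst G \<subseteq> fst H \<and> snd G \<subseteq> snd H \<and> (\<forall>e\<in>snd G. e \<subseteq> fst G) \<and> hg_iso G Q}"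

text \<open>Hereditary property of r-graphs (with the standing isolated-vertex assumption).\<close>
definition hereditary :: "nat \<Rightarrow> hgraph set \<Rightarrow> bool" where
  "hereditary r P \<longleftrightarrow>
     (\<forall>H\<in>P. is_rgraph r H) \<and>
     (\<forall>H G. H \<in> P \<longrightarrow> hg_iso H G \<longrightarrow> G \<in> P) \<and>
     (\<forall>H I. H \<in> P \<longrightarrow> I \<subseteq> fst H \<longrightarrow> induced H I \<in> P) \<and>
     (\<forall>H v. H \<in> P \<longrightarrow> v \<notin> fst H \<longrightarrow> (insert v (fst H), snd H) \<in> P)"

text \<open>P_n: members on vertex set [n], represented as {0..<n}.\<close>
definition Pn :: "hgraph set \<Rightarrow> nat \<Rightarrow> hgraph set" where
  "Pn P n = {H \<in> P. fst H = {..<n}}"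

definition polyQ :: "hgraph \<Rightarrow> hgraph \<Rightarrow> (nat \<Rightarrow> real) \<Rightarrow> real" where
  "polyQ Q H x = fact (card (fst Q)) *
     (\<Sum>I\<in>{I. I \<subseteq> fst H \<and> card I = card (fst Q)}. real (copies Q (induced H I)) * (\<Prod>i\<in>I. x i))"

definition pnorm :: "real \<Rightarrow> nat set \<Rightarrow> (nat \<Rightarrow> real) \<Rightarrow> real" where
  "pnorm p V x = (\<Sum>i\<in>V. \<bar>x i\<bar> powr p) powr (1 / p)"

definition lamQ :: "real \<Rightarrow> hgraph \<Rightarrow> hgraph \<Rightarrow> real" where
  "lamQ p Q H = Sup {polyQ Q H x | x. pnorm p (fst H) x = 1}"

definition principal_eigvec :: "real \<Rightarrow> hgraph \<Rightarrow> hgraph \<Rightarrow> (nat \<Rightarrow> real) \<Rightarrow> bool" where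
  "principal_eigvec p Q H x \<longleftrightarrow> (\<forall>i\<in>fst H. 0 \<le> x i) \<and> pnorm p (fst H) x = 1 \<and>
      polyQ Q H x = lamQ p Q H"

definition xmin :: "hgraph \<Rightarrow> (nat \<Rightarrow> real) \<Rightarrow> real" where
  "xmin H x = Min (x ` fst H)"

definition lamQ_prop :: "real \<Rightarrow> hgraph \<Rightarrow> hgraph set \<Rightarrow> nat \<Rightarrow> real" where
  "lamQ_prop p Q P n = Sup ((lamQ p Q) ` Pn P n)"

definition exQ :: "hgraph \<Rightarrow> hgraph set \<Rightarrow> nat \<Rightarrow> nat" where
  "exQ Q P n = Max ((copies Q) ` Pn P n)"

definition piQ :: "hgraph \<Rightarrow> hgraph set \<Rightarrow> real" where
  "piQ Q P = lim (\<lambda>n. real (exQ Q P n) / real (n choose card (fst Q)))"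

definition Qdeg :: "hgraph \<Rightarrow> hgraph \<Rightarrow> nat \<Rightarrow> nat" where
  "Qdeg Q H v = (\<Sum>I\<in>{I. I \<subseteq> fst H \<and> card I = card (fst Q) \<and> v \<in> I}. copies Q (induced H I))"

definition min_Qdeg :: "hgraph \<Rightarrow> hgraph \<Rightarrow> nat" where
  "min_Qdeg Q H = Min ((Qdeg Q H) ` fst H)"

end

theory Submission
  imports Defs "HOL-Analysis.Analysis" "HOL-Combinatorics.Permutations"
begin


lemma pow_sub_one_le:
  fixes X :: real assumes "1 \<le> X"
  shows "X ^ k - 1 \<le> real k * X ^ (k - 1) * (X - 1)"
proof (induction k)
  case 0 then show ?case by simp
next
  case (Suc k)
  have X0: "X ^ k \<ge> 1" using assms by (simp add: one_le_power)
  have "X ^ Suc k - 1 = X * (X ^ k - 1) + (X - 1)" by (simp add: algebra_simps)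
  also have "\<dots> \<le> X * (real k * X ^ (k - 1) * (X - 1)) + (X - 1)"
    using Suc assms by (intro add_right_mono mult_left_mono) auto
  also have "X * (real k * X ^ (k - 1) * (X - 1)) \<le> real k * X ^ k * (X - 1)"
  proof (cases k)
    case 0 then show ?thesis by simp
  next
    case (Suc j) then show ?thesis by (simp add: algebra_simps)
  qed
  finally have "X ^ Suc k - 1 \<le> real k * X ^ k * (X - 1) + (X - 1)" by linarith
  also have "\<dots> \<le> real k * X ^ k * (X - 1) + X ^ k * (X - 1)"
    using mult_right_mono[OF X0, of "X - 1"] assms by (intro add_left_mono) simp
  finally show ?case by (simp add: algebra_simps)
qed



lemma bern_aux:
  fixes u :: real assumes "0 \<le> u"
  shows "(1 + u) ^ j * (1 - real j * u) \<le> 1"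
proof (cases "real j * u \<ge> 1")
  case True
  then have "(1 + u) ^ j * (1 - real j * u) \<le> 0"
    using assms by (intro mult_nonneg_nonpos) auto
  then show ?thesis by linarith
next
  case False
  show ?thesis
  proof (cases j)
    case 0 then show ?thesis by simp
  next
    case (Suc i)
    then have j1: "real j \<ge> 1" by simp
    have "u \<le> real j * u" using mult_right_mono[OF j1 assms] by simp
    then have u1: "u \<le> 1" using False by linarith
    have b: "1 - real j * u \<le> (1 - u) ^ j"
      using Bernoulli_inequality[of "-u" j] u1 by simp
    have "(1 + u) ^ j * (1 - real j * u) \<le> (1 + u) ^ j * (1 - u) ^ j"
      using b assms by (intro mult_left_mono) auto
    also have "\<dots> = ((1 + u) * (1 - u)) ^ j" by (rule power_mult_distrib[symmetric])
    also have "(1 + u) * (1 - u) = 1 - u * u" by (simp add: algebra_simps)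
    also have "(1 - u * u) ^ j \<le> 1" using u1 assms
      by (intro power_le_one) (auto simp: mult_le_one)
    finally show ?thesis .
  qed
qed



lemma M_sub:
  fixes e X :: real and k :: nat
  assumes k1: "k \<ge> 1" and e0: "0 \<le> e" and X1: "1 \<le> X" and mX: "(1 - e) * X \<le> 1"
    and ke: "real k * e \<le> 1" and k1e: "k = 1 \<Longrightarrow> e \<le> 1/2"
  shows "X ^ (k - 1) * (1 - (1 - e) * X) \<le> 1 - e"
proof -
  have "1 * e \<le> real k * e" using k1 e0 by (intro mult_right_mono) auto
  then have e1: "e \<le> 1" using ke by simp
  show ?thesis
proof (cases "k = 1")
  case True
  have "1 - (1 - e) * X \<le> 1 - (1 - e)"
  proof -
    have "e \<le> 1/2" using k1e True by simp
    then have "(1 - e) * 1 \<le> (1 - e) * X" using X1 by (intro mult_left_mono) auto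
    then show ?thesis by simp
  qed
  then show ?thesis using True k1e by simp
next
  case False
  define j where "j = k - 1"
  have j1: "j \<ge> 1" and kj: "k = j + 1" using False k1 by (auto simp: j_def)
  define u where "u = X - 1"
  have u0: "u \<ge> 0" using X1 by (simp add: u_def)
  show ?thesis
  proof (cases "1 - (1 - e) * X \<le> 0")
    case True
    have "X ^ (k - 1) * (1 - (1 - e) * X) \<le> 0"
      using True X1 by (intro mult_nonneg_nonpos) auto
    then show ?thesis using e1 by simp
  next
    case False
    have je: "real j * e \<le> 1 - e" using ke kj by (simp add: algebra_simps)
    have jpos: "real j > 0" using j1 by simp
    have "1 - (1 - e) * X = e - (1 - e) * u" by (simp add: u_def algebra_simps)
    also have "\<dots> \<le> (1 - e) / real j - (1 - e) * u"
      using je jpos by (simp add: field_simps)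
    also have "\<dots> = ((1 - e) / real j) * (1 - real j * u)"
      using jpos by (simp add: field_simps)
    finally have h: "1 - (1 - e) * X \<le> ((1 - e) / real j) * (1 - real j * u)" .
    have "X ^ (k - 1) * (1 - (1 - e) * X) \<le> X ^ j * (((1 - e) / real j) * (1 - real j * u))"
      unfolding j_def[symmetric] using h X1 by (intro mult_left_mono) auto
    also have "\<dots> = ((1 - e) / real j) * ((1 + u) ^ j * (1 - real j * u))"
      by (simp add: u_def)
    also have "\<dots> \<le> ((1 - e) / real j) * 1"
      using bern_aux[OF u0, of j] je jpos e0 e1
      by (intro mult_left_mono) (auto intro!: divide_nonneg_pos)
    also have "\<dots> \<le> (1 - e) / 1" using jpos j1 e1
      by (simp only: mult_1_right, intro divide_left_mono) auto
    finally show ?thesis by simp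
  qed
qed
qed



lemma M_main:
  fixes e X :: real and k :: nat
  assumes k1: "k \<ge> 1" and e0: "0 \<le> e" and X1: "1 \<le> X" and mX: "(1 - e) * X \<le> 1"
    and ke: "real k * e \<le> 1" and k1e: "k = 1 \<Longrightarrow> e \<le> 1/2"
  shows "X ^ k * (1 - (1 - e) * X) \<le> real k * e"
proof -
  have ms: "X ^ (k - 1) * (1 - (1 - e) * X) \<le> 1 - e" by (rule M_sub[OF assms])
  have nn: "1 - (1 - e) * X \<ge> 0" using mX by simp
  have "X ^ k * (1 - (1 - e) * X) = (1 - (1 - e) * X) + (X ^ k - 1) * (1 - (1 - e) * X)"
    by (simp add: algebra_simps)
  also have "(X ^ k - 1) * (1 - (1 - e) * X) \<le> (real k * X ^ (k - 1) * (X - 1)) * (1 - (1 - e) * X)"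
    using pow_sub_one_le[OF X1, of k] nn by (rule mult_right_mono)
  also have "(real k * X ^ (k - 1) * (X - 1)) * (1 - (1 - e) * X)
      = (real k * (X - 1)) * (X ^ (k - 1) * (1 - (1 - e) * X))" by (simp add: algebra_simps)
  also have "\<dots> \<le> (real k * (X - 1)) * (1 - e)"
    using ms X1 by (intro mult_left_mono) auto
  finally have "X ^ k * (1 - (1 - e) * X) \<le> (1 - (1 - e) * X) + real k * (X - 1) * (1 - e)" by simp
  also have "\<dots> \<le> real k * e"
  proof -
    have "real k * e - ((1 - (1 - e) * X) + real k * (X - 1) * (1 - e)) = (real k - 1) * (1 - (1 - e) * X)"
      by (simp add: algebra_simps)
    also have "\<dots> \<ge> 0" using k1 nn by simp
    finally show ?thesis by linarith
  qed
  finally show ?thesis .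
qed



lemma R_main:
  fixes e X :: real and k :: nat
  assumes k1: "k \<ge> 1" and e0: "0 \<le> e" and eh: "e \<le> 1/2" and X1: "1 \<le> X" and mX: "(1 - e) * X \<le> 1"
  shows "X ^ k - 1 \<le> real k * e * (1 - e) * X ^ (k + 1)"
proof -
  have q: "X - 1 \<le> e * (1 - e) * X ^ 2"
  proof -
    have "e * (1 - e) * X ^ 2 - (X - 1) = (1 - (1 - e) * X) * (1 - e * X)"
      by (simp add: algebra_simps power2_eq_square)
    also have "\<dots> \<ge> 0"
    proof (rule mult_nonneg_nonneg)
      show "0 \<le> 1 - (1 - e) * X" using mX by simp
      have "e * X \<le> (1 - e) * X" using eh X1 by (intro mult_right_mono) auto
      then show "0 \<le> 1 - e * X" using mX by simp
    qed
    finally show ?thesis by simp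
  qed
  have "X ^ k - 1 \<le> real k * X ^ (k - 1) * (X - 1)" by (rule pow_sub_one_le[OF X1])
  also have "\<dots> \<le> real k * X ^ (k - 1) * (e * (1 - e) * X ^ 2)"
    using q X1 by (intro mult_left_mono) auto
  also have "\<dots> = real k * e * (1 - e) * (X ^ (k - 1) * X ^ 2)" by (simp add: algebra_simps)
  also have "X ^ (k - 1) * X ^ 2 = X ^ (k + 1)" using k1
    by (metis Nat.add_diff_assoc2 add_diff_cancel_right' nat_1_add_1 power_add add.commute add.left_commute)
  finally show ?thesis .
qed



lemma core_ineq:
  fixes e X c A pi \<epsilon> :: real and k :: nat
  assumes k1: "k \<ge> 1" and pi0: "0 < pi" and pic: "pi \<le> c" and cA: "c \<le> A"
    and ep0: "0 < \<epsilon>" and ep1: "\<epsilon> \<le> 1" and e0: "0 \<le> e"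
    and th: "A * real k * e < \<epsilon> * pi" and k1c: "k = 1 \<Longrightarrow> 2 * c \<le> A"
    and X1: "1 \<le> X" and mX: "(1 - e) * X \<le> 1"
  shows "(1 - \<epsilon>) * pi \<le> pi * (1 - e) * X ^ (k + 1) - c * (X ^ k - 1)"
proof -
  have A0: "A > 0" using pi0 pic cA by simp
  have "A * (real k * e) < A * \<epsilon>"
  proof -
    have "\<epsilon> * pi \<le> \<epsilon> * A" using pic cA ep0 by simp
    then show ?thesis using th by (simp add: algebra_simps)
  qed
  then have keps: "real k * e < \<epsilon>" using A0 by simp
  then have ke1: "real k * e \<le> 1" using ep1 by simp
  have eh: "e \<le> 1/2"
  proof (cases "k = 1")
    case True
    have "\<epsilon> * pi \<le> 1 * pi" using ep1 pi0 by (intro mult_right_mono) auto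
    then have "A * e < c" using th True pic by simp
    then have "A * e < A * (1/2)" using k1c[OF True] by simp
    then show ?thesis using A0 by simp
  next
    case False
    then have "real k \<ge> 2" using k1 by simp
    then have "2 * e \<le> real k * e" using e0 by (intro mult_right_mono) auto
    then show ?thesis using ke1 by simp
  qed
  have k1e: "k = 1 \<Longrightarrow> e \<le> 1/2" using eh by simp
  have M: "X ^ k * (1 - (1 - e) * X) \<le> real k * e" by (rule M_main[OF k1 e0 X1 mX ke1 k1e])
  have R: "X ^ k - 1 \<le> real k * e * (1 - e) * X ^ (k + 1)" by (rule R_main[OF k1 e0 eh X1 mX])
  define \<kappa> where "\<kappa> = \<epsilon> - 1 + (1 - e) * X ^ (k + 1)"
  have Xk1: "X ^ (k + 1) = X ^ k * X" by simp
  have goal: "pi * \<kappa> - c * (X ^ k - 1) \<ge> 0"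
  proof (cases "\<kappa> \<ge> 0")
    case True
    have Xk0: "X ^ k - 1 \<ge> 0" using X1 by (simp add: one_le_power)
    have key: "real k * e * \<kappa> \<ge> \<epsilon> * (X ^ k - 1)"
    proof (cases "1 - (1 - e) * X ^ (k + 1) \<le> 0")
      case True
      have ke0: "real k * e \<ge> 0" using e0 by simp
      have eq1: "real k * e * \<kappa> = real k * e * \<epsilon> + real k * e * ((1 - e) * X ^ (k + 1) - 1)"
        by (simp add: \<kappa>_def algebra_simps)
      have ineq1: "real k * e * ((1 - e) * X ^ (k + 1) - 1) \<ge> \<epsilon> * (real k * e) * ((1 - e) * X ^ (k + 1) - 1)"
        using True ke0 ep1 by (intro mult_right_mono) (auto intro: mult_left_le_one_le ep0 less_imp_le)
      have eq2: "\<epsilon> * (real k * e * (1 - e) * X ^ (k + 1)) = real k * e * \<epsilon> + \<epsilon> * (real k * e) * ((1 - e) * X ^ (k + 1) - 1)"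
        by (simp add: algebra_simps)
      have "real k * e * \<kappa> \<ge> \<epsilon> * (real k * e * (1 - e) * X ^ (k + 1))"
        using eq1 ineq1 eq2 by linarith
      moreover have "\<epsilon> * (real k * e * (1 - e) * X ^ (k + 1)) \<ge> \<epsilon> * (X ^ k - 1)"
        using R ep0 by simp
      ultimately show ?thesis by linarith
    next
      case False
      have eq1: "real k * e * \<kappa> = real k * e * \<epsilon> - real k * e * (1 - (1 - e) * X ^ (k + 1))"
        by (simp add: \<kappa>_def algebra_simps)
      have in1: "real k * e * (1 - (1 - e) * X ^ (k + 1)) \<le> \<epsilon> * (1 - (1 - e) * X ^ (k + 1))"
        using False keps by (intro mult_right_mono) auto
      have eq2: "\<epsilon> * (real k * e - 1 + (1 - e) * X ^ (k + 1)) = real k * e * \<epsilon> - \<epsilon> * (1 - (1 - e) * X ^ (k + 1))"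
        by (simp add: algebra_simps)
      have m1: "real k * e - 1 + (1 - e) * X ^ (k + 1) \<ge> X ^ k - 1"
        using M Xk1 by (simp add: algebra_simps)
      have "\<epsilon> * (real k * e - 1 + (1 - e) * X ^ (k + 1)) \<ge> \<epsilon> * (X ^ k - 1)"
        using m1 ep0 by (intro mult_left_mono) auto
      then show ?thesis using eq1 in1 eq2 by linarith
    qed
    have f1: "\<epsilon> * (pi * \<kappa>) \<ge> (A * real k * e) * \<kappa>"
    proof -
      have "(A * real k * e) * \<kappa> \<le> (\<epsilon> * pi) * \<kappa>" using th True by (intro mult_right_mono) auto
      then show ?thesis by (simp add: algebra_simps)
    qed
    have f2: "A * (real k * e * \<kappa>) \<ge> A * (\<epsilon> * (X ^ k - 1))"
      using key A0 by simp
    have f3: "A * (\<epsilon> * (X ^ k - 1)) \<ge> \<epsilon> * (c * (X ^ k - 1))"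
    proof -
      have "c * (\<epsilon> * (X ^ k - 1)) \<le> A * (\<epsilon> * (X ^ k - 1))"
        using cA ep0 Xk0 by (intro mult_right_mono) auto
      then show ?thesis by (simp add: algebra_simps)
    qed
    have "\<epsilon> * (pi * \<kappa> - c * (X ^ k - 1)) \<ge> 0" using f1 f2 f3 by (simp add: algebra_simps)
    then show ?thesis using ep0 by (simp add: zero_le_mult_iff)
  next
    case False
    have "pi * \<kappa> \<ge> c * \<kappa>" using False pic by (simp add: mult_right_mono_neg)
    moreover have "c * \<kappa> - c * (X ^ k - 1) = c * (\<epsilon> - X ^ k * (1 - (1 - e) * X))"
      by (simp add: \<kappa>_def algebra_simps)
    moreover have "c * (\<epsilon> - X ^ k * (1 - (1 - e) * X)) \<ge> 0"
      using M keps pi0 pic by simp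
    ultimately show ?thesis by linarith
  qed
  then show ?thesis by (simp add: \<kappa>_def algebra_simps)
qed




definition cset :: "hgraph \<Rightarrow> hgraph \<Rightarrow> hgraph set" where
  "cset Q H = {G. fst G \<subseteq> fst H \<and> snd G \<subseteq> snd H \<and> (\<forall>e\<in>snd G. e \<subseteq> fst G) \<and> hg_iso G Q}"

lemma copies_cset: "copies Q H = card (cset Q H)"
  by (simp add: copies_def cset_def)

lemma cset_finite:
  assumes "finite (fst H)" shows "finite (cset Q H)"
proof -
  have "cset Q H \<subseteq> Pow (fst H) \<times> Pow (Pow (fst H))"
  proof
    fix G assume G: "G \<in> cset Q H"
    obtain a b where ab: "G = (a, b)" by (cases G)
    have "a \<subseteq> fst H" "\<forall>e\<in>b. e \<subseteq> a" using G ab by (auto simp: cset_def)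
    then have "b \<subseteq> Pow (fst H)" by blast
    then show "G \<in> Pow (fst H) \<times> Pow (Pow (fst H))" using ab \<open>a \<subseteq> fst H\<close> by simp
  qed
  moreover have "finite (Pow (fst H) \<times> Pow (Pow (fst H)))" using assms by simp
  ultimately show ?thesis by (rule finite_subset)
qed

lemma iso_card:
  assumes "hg_iso G Q" "finite (fst Q)"
  shows "finite (fst G)" "card (fst G) = card (fst Q)"
proof -
  obtain f where f: "bij_betw f (fst G) (fst Q)" using assms(1) unfolding hg_iso_def by blast
  show "finite (fst G)" using bij_betw_finite[OF f] assms(2) by simp
  show "card (fst G) = card (fst Q)" using bij_betw_same_card[OF f] .
qed

lemma cset_induced:
  assumes fQ: "finite (fst Q)" and IH: "I \<subseteq> fst H" and fI: "finite I" and cI: "card I = card (fst Q)"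
  shows "cset Q (induced H I) = {G \<in> cset Q H. fst G = I}"
proof (intro equalityI subsetI)
  fix G assume G: "G \<in> cset Q (induced H I)"
  then have a: "fst G \<subseteq> I" "snd G \<subseteq> snd H" "\<forall>e\<in>snd G. e \<subseteq> fst G" "hg_iso G Q"
    by (auto simp: cset_def induced_def)
  have "card (fst G) = card I" using iso_card(2)[OF a(4) fQ] cI by simp
  then have "fst G = I" using card_subset_eq[OF fI a(1)] by simp
  then show "G \<in> {G \<in> cset Q H. fst G = I}" using a IH by (auto simp: cset_def)
next
  fix G assume "G \<in> {G \<in> cset Q H. fst G = I}"
  then show "G \<in> cset Q (induced H I)" by (auto simp: cset_def induced_def)
qed

lemma copies_decomp:
  assumes fH: "finite (fst H)" and fQ: "finite (fst Q)"
  shows "copies Q H = (\<Sum>I\<in>{I. I \<subseteq> fst H \<and> card I = card (fst Q)}. copies Q (induced H I))"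
proof -
  let ?T = "{I. I \<subseteq> fst H \<and> card I = card (fst Q)}"
  have fT: "finite ?T" using fH by (auto intro: finite_subset[of _ "Pow (fst H)"])
  have sub: "fst ` cset Q H \<subseteq> ?T"
    using iso_card(2)[OF _ fQ] by (auto simp: cset_def)
  have "(\<Sum>I\<in>?T. copies Q (induced H I)) = (\<Sum>I\<in>?T. card {G \<in> cset Q H. fst G = I})"
  proof (rule sum.cong[OF refl])
    fix I assume I: "I \<in> ?T"
    then have "I \<subseteq> fst H" "card I = card (fst Q)" by auto
    moreover have "finite I" using \<open>I \<subseteq> fst H\<close> fH finite_subset by blast
    ultimately show "copies Q (induced H I) = card {G \<in> cset Q H. fst G = I}"
      unfolding copies_cset by (subst cset_induced[OF fQ]) auto
  qed
  also have "\<dots> = (\<Sum>I\<in>?T. \<Sum>G\<in>{G \<in> cset Q H. fst G = I}. 1)" by simp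
  also have "\<dots> = (\<Sum>G\<in>cset Q H. 1)"
    by (rule sum.group[OF cset_finite[OF fH] fT sub])
  also have "\<dots> = copies Q H" by (simp add: copies_cset)
  finally show ?thesis by simp
qed

lemma cset_repr:
  assumes fI: "finite I" and cI: "card I = card (fst Q)"
    and G: "G \<in> cset Q (I, E)"
  shows "\<exists>h. bij_betw h (fst Q) I \<and> G = (I, (\<lambda>e. h ` e) ` snd Q)"
proof -
  obtain f where f: "bij_betw f (fst G) (fst Q)" "snd Q = (\<lambda>e. f ` e) ` snd G"
    using G by (auto simp: cset_def hg_iso_def)
  have sub: "fst G \<subseteq> I" and eG: "\<forall>e\<in>snd G. e \<subseteq> fst G" using G by (auto simp: cset_def)
  have "card (fst G) = card I" using bij_betw_same_card[OF f(1)] cI by simp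
  then have fG: "fst G = I" using card_subset_eq[OF fI sub] by simp
  define h where "h = the_inv_into (fst G) f"
  have hb: "bij_betw h (fst Q) (fst G)" unfolding h_def by (rule bij_betw_the_inv_into[OF f(1)])
  have inj: "inj_on f (fst G)" using f(1) bij_betw_imp_inj_on by blast
  have hf: "\<And>x. x \<in> fst G \<Longrightarrow> h (f x) = x" unfolding h_def using the_inv_into_f_f[OF inj] by blast
  have hfe: "h ` f ` e = e" if "e \<in> snd G" for e
  proof -
    have "e \<subseteq> fst G" using eG that by blast
    then have "(\<lambda>x. h (f x)) ` e = (\<lambda>x. x) ` e" using hf by (intro image_cong) auto
    then show ?thesis by (simp add: image_image)
  qed
  have "(\<lambda>e. h ` e) ` snd Q = (\<lambda>e. h ` f ` e) ` snd G" using f(2) by (simp add: image_image)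
  also have "\<dots> = (\<lambda>e. e) ` snd G" using hfe by (intro image_cong) auto
  finally have "(\<lambda>e. h ` e) ` snd Q = snd G" by simp
  then show ?thesis using hb fG by (intro exI[of _ h]) (auto simp: prod_eq_iff)
qed

lemma copies_le_fact:
  assumes Qr: "\<forall>e\<in>snd Q. e \<subseteq> fst Q" and fQ: "finite (fst Q)" and fI: "finite I"
    and cI: "card I = card (fst Q)"
  shows "copies Q (I, E) \<le> fact (card (fst Q))"
proof -
  obtain g0 where g0: "bij_betw g0 (fst Q) I" using finite_same_card_bij[OF fQ fI] cI by auto
  define gi where "gi = the_inv_into (fst Q) g0"
  have gib: "bij_betw gi I (fst Q)" unfolding gi_def by (rule bij_betw_the_inv_into[OF g0])
  have g0gi: "\<And>y. y \<in> I \<Longrightarrow> g0 (gi y) = y" unfolding gi_def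
    using f_the_inv_into_f_bij_betw[OF g0] by blast
  have "cset Q (I, E) \<subseteq> (\<lambda>\<sigma>. (I, (\<lambda>e. (g0 \<circ> \<sigma>) ` e) ` snd Q)) ` {\<sigma>. \<sigma> permutes fst Q}"
  proof
    fix G assume "G \<in> cset Q (I, E)"
    then obtain h where h: "bij_betw h (fst Q) I" "G = (I, (\<lambda>e. h ` e) ` snd Q)"
      using cset_repr[OF fI cI] by blast
    define \<sigma> where "\<sigma> = (\<lambda>x. if x \<in> fst Q then gi (h x) else x)"
    have "bij_betw (gi \<circ> h) (fst Q) (fst Q)" by (rule bij_betw_trans[OF h(1) gib])
    then have "bij_betw \<sigma> (fst Q) (fst Q)" by (rule bij_betw_cong[THEN iffD1, rotated]) (simp add: \<sigma>_def)
    then have perm: "\<sigma> permutes fst Q" by (rule bij_imp_permutes) (simp add: \<sigma>_def)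
    have eq: "(g0 \<circ> \<sigma>) ` e = h ` e" if "e \<in> snd Q" for e
    proof -
      have "e \<subseteq> fst Q" using Qr that by blast
      moreover have "\<And>x. x \<in> fst Q \<Longrightarrow> g0 (\<sigma> x) = h x"
      proof -
        fix x assume x: "x \<in> fst Q"
        then have "h x \<in> I" using h(1) bij_betwE by blast
        then show "g0 (\<sigma> x) = h x" using x g0gi by (simp add: \<sigma>_def)
      qed
      ultimately have gx: "\<And>x. x \<in> e \<Longrightarrow> (g0 \<circ> \<sigma>) x = h x" by auto
      show ?thesis by (rule image_cong[OF refl gx])
    qed
    have "(\<lambda>e. (g0 \<circ> \<sigma>) ` e) ` snd Q = (\<lambda>e. h ` e) ` snd Q" by (rule image_cong[OF refl eq])
    show "G \<in> (\<lambda>\<sigma>. (I, (\<lambda>e. (g0 \<circ> \<sigma>) ` e) ` snd Q)) ` {\<sigma>. \<sigma> permutes fst Q}"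
    proof (rule image_eqI[of _ _ \<sigma>])
      show "G = (I, (\<lambda>e. (g0 \<circ> \<sigma>) ` e) ` snd Q)" using h(2) \<open>(\<lambda>e. (g0 \<circ> \<sigma>) ` e) ` snd Q = (\<lambda>e. h ` e) ` snd Q\<close> by simp
      show "\<sigma> \<in> {\<sigma>. \<sigma> permutes fst Q}" using perm by simp
    qed
  qed
  then have "copies Q (I, E) \<le> card ((\<lambda>\<sigma>. (I, (\<lambda>e. (g0 \<circ> \<sigma>) ` e) ` snd Q)) ` {\<sigma>. \<sigma> permutes fst Q})"
    unfolding copies_cset by (rule card_mono[OF finite_imageI[OF finite_permutations[OF fQ]]])
  also have "\<dots> \<le> card {\<sigma>. \<sigma> permutes fst Q}" by (rule card_image_le[OF finite_permutations[OF fQ]])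
  also have "\<dots> = fact (card (fst Q))" by (rule card_permutations[OF refl fQ])
  finally show ?thesis .
qed

lemma copies_le_one:
  assumes Qr: "\<forall>e\<in>snd Q. e \<subseteq> fst Q \<and> card e = r" and r2: "2 \<le> r" and cQ: "card (fst Q) = 2"
    and fI: "finite I" and cI: "card I = card (fst Q)"
  shows "copies Q (I, E) \<le> 1"
proof -
  have fQ: "finite (fst Q)" using cQ card.infinite by fastforce
  have "cset Q (I, E) \<subseteq> {(I, (\<lambda>e. I) ` snd Q)}"
  proof
    fix G assume "G \<in> cset Q (I, E)"
    then obtain h where h: "bij_betw h (fst Q) I" "G = (I, (\<lambda>e. h ` e) ` snd Q)"
      using cset_repr[OF fI cI] by blast
    have "h ` e = I" if "e \<in> snd Q" for e
    proof -
      have "e \<subseteq> fst Q" "card e = r" using Qr that by auto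
      moreover have "card e \<le> card (fst Q)" using card_mono[OF fQ] \<open>e \<subseteq> fst Q\<close> by blast
      ultimately have "card e = card (fst Q)" using r2 cQ by simp
      then have "e = fst Q" using card_subset_eq[OF fQ \<open>e \<subseteq> fst Q\<close>] by simp
      then show ?thesis using h(1) by (simp add: bij_betw_def)
    qed
    then have "(\<lambda>e. h ` e) ` snd Q = (\<lambda>e. I) ` snd Q" by (intro image_cong) auto
    then show "G \<in> {(I, (\<lambda>e. I) ` snd Q)}" using h(2) by simp
  qed
  then have "card (cset Q (I, E)) \<le> card {(I, (\<lambda>e. I) ` snd Q)}" by (intro card_mono) auto
  then show ?thesis by (simp add: copies_cset)
qed


lemma her_rg: "hereditary r P \<Longrightarrow> H \<in> P \<Longrightarrow> is_rgraph r H"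
  unfolding hereditary_def by blast
lemma her_iso: "hereditary r P \<Longrightarrow> H \<in> P \<Longrightarrow> hg_iso H G \<Longrightarrow> G \<in> P"
  unfolding hereditary_def by blast
lemma her_ind: "hereditary r P \<Longrightarrow> H \<in> P \<Longrightarrow> I \<subseteq> fst H \<Longrightarrow> induced H I \<in> P"
  unfolding hereditary_def by blast
lemma her_add: "hereditary r P \<Longrightarrow> H \<in> P \<Longrightarrow> v \<notin> fst H \<Longrightarrow> (insert v (fst H), snd H) \<in> P"
  unfolding hereditary_def by blast

lemma copies_iso_le:
  assumes fH: "finite (fst H)" and f: "bij_betw f (fst H) (fst G)" and E: "snd G = (\<lambda>e. f ` e) ` snd H"
  shows "copies Q H \<le> copies Q G"
proof -
  define \<phi> where "\<phi> = (\<lambda>C::hgraph. (f ` fst C, (\<lambda>e. f ` e) ` snd C))"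
  have injf: "inj_on f (fst H)" using f bij_betw_imp_inj_on by blast
  have fG: "finite (fst G)" using bij_betw_finite[OF f] fH by simp
  have sub: "fst C \<subseteq> fst H" "snd C \<subseteq> Pow (fst H)" if "C \<in> cset Q H" for C
    using that by (auto simp: cset_def)
  have inj: "inj_on \<phi> (cset Q H)"
  proof (rule inj_onI)
    fix C1 C2 assume C1: "C1 \<in> cset Q H" and C2: "C2 \<in> cset Q H" and eq: "\<phi> C1 = \<phi> C2"
    have "f ` fst C1 = f ` fst C2" using eq by (simp add: \<phi>_def)
    then have a: "fst C1 = fst C2" using inj_on_image_eq_iff[OF injf sub(1)[OF C1] sub(1)[OF C2]] by simp
    have "(\<lambda>e. f ` e) ` snd C1 = (\<lambda>e. f ` e) ` snd C2" using eq by (simp add: \<phi>_def)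
    then have b: "snd C1 = snd C2"
      using inj_on_image_eq_iff[OF inj_on_image_Pow[OF injf] sub(2)[OF C1] sub(2)[OF C2]] by simp
    show "C1 = C2" using a b by (simp add: prod_eq_iff)
  qed
  have maps: "\<phi> ` cset Q H \<subseteq> cset Q G"
  proof
    fix D assume "D \<in> \<phi> ` cset Q H"
    then obtain C where C: "C \<in> cset Q H" and D: "D = \<phi> C" by blast
    have c1: "fst C \<subseteq> fst H" and c2: "snd C \<subseteq> snd H" and c3: "\<forall>e\<in>snd C. e \<subseteq> fst C"
      and c4: "hg_iso C Q"
      using C by (auto simp: cset_def)
    obtain g where g: "bij_betw g (fst C) (fst Q)" "snd Q = (\<lambda>e. g ` e) ` snd C"
      using c4 by (auto simp: hg_iso_def)
    have injC: "inj_on f (fst C)" using inj_on_subset[OF injf c1] .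
    have bC: "bij_betw f (fst C) (f ` fst C)" using injC by (simp add: bij_betw_def)
    define fi where "fi = the_inv_into (fst C) f"
    have bfi: "bij_betw fi (f ` fst C) (fst C)" unfolding fi_def by (rule bij_betw_the_inv_into[OF bC])
    have fif: "\<And>x. x \<in> fst C \<Longrightarrow> fi (f x) = x" unfolding fi_def using the_inv_into_f_f[OF injC] by blast
    have bg: "bij_betw (g \<circ> fi) (f ` fst C) (fst Q)" by (rule bij_betw_trans[OF bfi g(1)])
    have img: "(\<lambda>e. (g \<circ> fi) ` e) ` (\<lambda>e. f ` e) ` snd C = snd Q"
    proof -
      have "(\<lambda>e. (g \<circ> fi) ` e) ` (\<lambda>e. f ` e) ` snd C = (\<lambda>e. (g \<circ> fi) ` f ` e) ` snd C"
        by (simp add: image_image)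
      also have "\<dots> = (\<lambda>e. g ` e) ` snd C"
      proof (rule image_cong[OF refl])
        fix e assume "e \<in> snd C"
        then have es: "e \<subseteq> fst C" using c3 by blast
        have "(g \<circ> fi) ` f ` e = (\<lambda>x. g (fi (f x))) ` e" by (simp add: image_image)
        also have "\<dots> = g ` e"
        proof (rule image_cong[OF refl])
          fix x assume "x \<in> e" then show "g (fi (f x)) = g x" using es fif by auto
        qed
        finally show "(g \<circ> fi) ` f ` e = g ` e" .
      qed
      finally show ?thesis using g(2) by simp
    qed
    have iso: "hg_iso (\<phi> C) Q" unfolding hg_iso_def \<phi>_def fst_conv snd_conv
      by (intro exI[of _ "g \<circ> fi"] conjI bg img[symmetric])
    have d1: "f ` fst C \<subseteq> fst G" using c1 f by (auto simp: bij_betw_def)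
    have d2: "(\<lambda>e. f ` e) ` snd C \<subseteq> snd G" using c2 E by auto
    have d3: "\<forall>e\<in>(\<lambda>e. f ` e) ` snd C. e \<subseteq> f ` fst C" using c3 by auto
    show "D \<in> cset Q G" using d1 d2 d3 iso unfolding D cset_def by (simp add: \<phi>_def)
  qed
  have "copies Q H = card (\<phi> ` cset Q H)" unfolding copies_cset using card_image[OF inj] by simp
  also have "\<dots> \<le> card (cset Q G)" by (rule card_mono[OF cset_finite[OF fG] maps])
  finally show ?thesis by (simp add: copies_cset)
qed

lemma Pn_finite:
  assumes her: "hereditary r P" shows "finite (Pn P n)"
proof -
  have "Pn P n \<subseteq> {{..<n}} \<times> Pow (Pow {..<n})"
  proof
    fix H assume H: "H \<in> Pn P n"
    then have "H \<in> P" "fst H = {..<n}" by (auto simp: Pn_def)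
    then have "is_rgraph r H" using her_rg[OF her] by blast
    then have "\<forall>e\<in>snd H. e \<subseteq> fst H" by (simp add: is_rgraph_def)
    then have "snd H \<subseteq> Pow {..<n}" using \<open>fst H = {..<n}\<close> by blast
    then show "H \<in> {{..<n}} \<times> Pow (Pow {..<n})" using \<open>fst H = {..<n}\<close> by (cases H) auto
  qed
  moreover have "finite ({{..<n}} \<times> Pow (Pow {..<n}))" by simp
  ultimately show ?thesis by (rule finite_subset)
qed

lemma empty_in_P:
  assumes her: "hereditary r P" and r2: "2 \<le> r" and H: "H \<in> P"
  shows "({..<n}, {}) \<in> P"
proof (induction n)
  case 0
  have "induced H {} \<in> P" using her_ind[OF her H] by simp
  moreover have "induced H {} = ({}, {})"
  proof -
    have "\<forall>e\<in>snd H. card e = r" using her_rg[OF her H] by (simp add: is_rgraph_def)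
    then have "{e \<in> snd H. e \<subseteq> {}} = {}" using r2 by auto
    then show ?thesis by (simp add: induced_def)
  qed
  ultimately show ?case by simp
next
  case (Suc n)
  have "(insert n (fst ({..<n}, {} :: nat set set)), snd ({..<n}, {} :: nat set set)) \<in> P"
    by (rule her_add[OF her Suc]) simp
  moreover have "insert n {..<n} = {..<Suc n}" by auto
  ultimately show ?case by simp
qed

lemma Pn_nonempty:
  assumes her: "hereditary r P" and r2: "2 \<le> r" and H: "H \<in> P"
  shows "Pn P n \<noteq> {}"
  using empty_in_P[OF her r2 H, of n] by (auto simp: Pn_def)

lemma exQ_attained:
  assumes her: "hereditary r P" and r2: "2 \<le> r" and H: "H \<in> P"
  shows "\<exists>H0\<in>Pn P n. copies Q H0 = exQ Q P n"
proof -
  have "exQ Q P n \<in> copies Q ` Pn P n" unfolding exQ_def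
    using Pn_finite[OF her] Pn_nonempty[OF her r2 H] by (intro Max_in) auto
  then show ?thesis by auto
qed

lemma exQ_upper:
  assumes her: "hereditary r P" and G: "G \<in> Pn P n"
  shows "copies Q G \<le> exQ Q P n"
  unfolding exQ_def using Pn_finite[OF her] G by (intro Max_ge) auto

lemma induced_induced: "I \<subseteq> W \<Longrightarrow> induced (induced H W) I = induced H I"
  by (auto simp: induced_def)

lemma delete_vertex_le:
  assumes her: "hereditary r P" and H: "H \<in> Pn P (Suc n)" and v: "v < Suc n"
  shows "copies Q (induced H ({..<Suc n} - {v})) \<le> exQ Q P n"
proof -
  let ?W = "{..<Suc n} - {v}"
  have HP: "H \<in> P" and fH: "fst H = {..<Suc n}" using H by (auto simp: Pn_def)
  have iP: "induced H ?W \<in> P" using her_ind[OF her HP] fH by auto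
  define f where "f = (\<lambda>i::nat. if i < v then i else i - 1)"
  define g where "g = (\<lambda>i::nat. if i < v then i else i + 1)"
  have bij: "bij_betw f ?W {..<n}"
    by (rule bij_betw_byWitness[where f'=g]) (use v in \<open>auto simp: f_def g_def\<close>)
  define G where "G = ({..<n}, (\<lambda>e. f ` e) ` snd (induced H ?W))"
  have bij': "bij_betw f (fst (induced H ?W)) (fst G)" using bij by (simp add: induced_def G_def)
  have iso: "hg_iso (induced H ?W) G" unfolding hg_iso_def
    by (intro exI[of _ f] conjI bij') (simp add: G_def)
  have "G \<in> P" by (rule her_iso[OF her iP iso])
  then have GP: "G \<in> Pn P n" by (simp add: Pn_def G_def)
  have "copies Q (induced H ?W) \<le> copies Q G"
    by (rule copies_iso_le[OF _ bij']) (simp_all add: induced_def G_def)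
  also have "\<dots> \<le> exQ Q P n" by (rule exQ_upper[OF her GP])
  finally show ?thesis .
qed

lemma double_count:
  assumes fH: "finite (fst H)" and fQ: "finite (fst Q)"
  shows "(\<Sum>v\<in>fst H. copies Q (induced H (fst H - {v}))) = (card (fst H) - card (fst Q)) * copies Q H"
proof -
  let ?V = "fst H" and ?s = "card (fst Q)"
  let ?T = "{I. I \<subseteq> ?V \<and> card I = ?s}"
  let ?N = "\<lambda>I. copies Q (induced H I)"
  have fT: "finite ?T" using fH by (auto intro: finite_subset[of _ "Pow ?V"])
  have "(\<Sum>v\<in>?V. copies Q (induced H (?V - {v}))) = (\<Sum>v\<in>?V. \<Sum>I\<in>{I \<in> ?T. v \<notin> I}. ?N I)"
  proof (rule sum.cong[OF refl])
    fix v assume v: "v \<in> ?V"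
    have fW: "finite (fst (induced H (?V - {v})))" using fH by (simp add: induced_def)
    have "copies Q (induced H (?V - {v})) =
        (\<Sum>I\<in>{I. I \<subseteq> ?V - {v} \<and> card I = ?s}. copies Q (induced (induced H (?V - {v})) I))"
      using copies_decomp[OF fW fQ] by (simp add: induced_def)
    also have "\<dots> = (\<Sum>I\<in>{I. I \<subseteq> ?V - {v} \<and> card I = ?s}. ?N I)"
      by (rule sum.cong[OF refl]) (simp add: induced_induced)
    also have "{I. I \<subseteq> ?V - {v} \<and> card I = ?s} = {I \<in> ?T. v \<notin> I}" by auto
    finally show "copies Q (induced H (?V - {v})) = (\<Sum>I\<in>{I \<in> ?T. v \<notin> I}. ?N I)" .
  qed
  also have "\<dots> = (\<Sum>I\<in>?T. \<Sum>v\<in>{v \<in> ?V. v \<notin> I}. ?N I)"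
    by (rule sum.swap_restrict[OF fH fT])
  also have "\<dots> = (\<Sum>I\<in>?T. (card ?V - ?s) * ?N I)"
  proof (rule sum.cong[OF refl])
    fix I assume I: "I \<in> ?T"
    have "{v \<in> ?V. v \<notin> I} = ?V - I" by auto
    moreover have "card (?V - I) = card ?V - ?s"
    proof -
      have "I \<subseteq> ?V" "card I = ?s" using I by auto
      moreover have "finite I" using \<open>I \<subseteq> ?V\<close> fH finite_subset by blast
      ultimately show ?thesis using card_Diff_subset by metis
    qed
    ultimately show "(\<Sum>v\<in>{v \<in> ?V. v \<notin> I}. ?N I) = (card ?V - ?s) * ?N I" by simp
  qed
  also have "\<dots> = (card ?V - ?s) * copies Q H"
    by (simp add: sum_distrib_left[symmetric] copies_decomp[OF fH fQ])
  finally show ?thesis .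
qed


definition cQ :: "hgraph \<Rightarrow> real" where
  "cQ Q = (if card (fst Q) = 2 then 1 else fact (card (fst Q)))"

lemma copies_le_cQ:
  assumes Q: "is_rgraph r Q" and r2: "2 \<le> r" and fI: "finite I" and cI: "card I = card (fst Q)"
  shows "real (copies Q (I, E)) \<le> cQ Q"
proof -
  have fQ: "finite (fst Q)" and Qr: "\<forall>e\<in>snd Q. e \<subseteq> fst Q \<and> card e = r"
    using Q by (auto simp: is_rgraph_def)
  show ?thesis
  proof (cases "card (fst Q) = 2")
    case True
    have "copies Q (I, E) \<le> 1" by (rule copies_le_one[OF Qr r2 True fI cI])
    then show ?thesis using True by (simp add: cQ_def)
  next
    case False
    have "copies Q (I, E) \<le> fact (card (fst Q))" by (rule copies_le_fact[OF _ fQ fI cI]) (use Qr in blast)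
    then have "real (copies Q (I, E)) \<le> real (fact (card (fst Q)))" by (rule of_nat_mono)
    then show ?thesis using False by (simp add: cQ_def)
  qed
qed

lemma cQ_le_fact: "cQ Q \<le> fact (card (fst Q))"
  by (simp add: cQ_def)

lemma copies_le_cQ_total:
  assumes Q: "is_rgraph r Q" and r2: "2 \<le> r" and fH: "finite (fst H)"
  shows "real (copies Q H) \<le> cQ Q * real (card (fst H) choose card (fst Q))"
proof -
  have fQ: "finite (fst Q)" using Q by (simp add: is_rgraph_def)
  let ?T = "{I. I \<subseteq> fst H \<and> card I = card (fst Q)}"
  have "real (copies Q H) = (\<Sum>I\<in>?T. real (copies Q (induced H I)))"
    using copies_decomp[OF fH fQ] by simp
  also have "\<dots> \<le> (\<Sum>I\<in>?T. cQ Q)"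
  proof (rule sum_mono)
    fix I assume I: "I \<in> ?T"
    then have "finite I" "card I = card (fst Q)" using fH finite_subset by auto
    then show "real (copies Q (induced H I)) \<le> cQ Q"
      unfolding induced_def by (rule copies_le_cQ[OF Q r2])
  qed
  also have "\<dots> = cQ Q * real (card (fst H) choose card (fst Q))"
    using n_subsets[OF fH, of "card (fst Q)"] by simp
  finally show ?thesis .
qed

lemma ex_mono:
  assumes her: "hereditary r P" and r2: "2 \<le> r" and H: "H \<in> P" and fQ: "finite (fst Q)"
  shows "(Suc n - card (fst Q)) * exQ Q P (Suc n) \<le> Suc n * exQ Q P n"
proof -
  obtain H0 where H0: "H0 \<in> Pn P (Suc n)" "copies Q H0 = exQ Q P (Suc n)"
    using exQ_attained[OF her r2 H] by blast
  have fH: "fst H0 = {..<Suc n}" using H0 by (simp add: Pn_def)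
  have "(Suc n - card (fst Q)) * exQ Q P (Suc n) = (\<Sum>v\<in>fst H0. copies Q (induced H0 (fst H0 - {v})))"
    using double_count[of H0 Q] fH fQ H0(2) by simp
  also have "\<dots> \<le> (\<Sum>v\<in>fst H0. exQ Q P n)"
    by (rule sum_mono) (use delete_vertex_le[OF her H0(1)] fH in auto)
  also have "\<dots> = Suc n * exQ Q P n" using fH by simp
  finally show ?thesis .
qed

definition aseq :: "hgraph \<Rightarrow> hgraph set \<Rightarrow> nat \<Rightarrow> real" where
  "aseq Q P n = real (exQ Q P n) / real (n choose card (fst Q))"

lemma aseq_dec:
  assumes her: "hereditary r P" and r2: "2 \<le> r" and H: "H \<in> P" and fQ: "finite (fst Q)"
    and n: "card (fst Q) \<le> n"
  shows "aseq Q P (Suc n) \<le> aseq Q P n"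
proof -
  let ?s = "card (fst Q)"
  define d where "d = real (Suc n - ?s)"
  define C' where "C' = real (Suc n choose ?s)"
  define C where "C = real (n choose ?s)"
  define e' where "e' = real (exQ Q P (Suc n))"
  define e where "e = real (exQ Q P n)"
  have d0: "d > 0" using n by (simp add: d_def)
  have C0: "C > 0" using n by (simp add: C_def)
  have C'0: "C' > 0" using n by (simp add: C'_def)
  have dC: "d * C' = real (Suc n) * C"
  proof -
    have "(Suc n - ?s) * (Suc n choose ?s) = Suc n * ((Suc n - 1) choose ?s)"
      by (rule binomial_absorb_comp)
    then have "real ((Suc n - ?s) * (Suc n choose ?s)) = real (Suc n * (n choose ?s))" by simp
    then show ?thesis unfolding d_def C'_def C_def by (simp only: of_nat_mult)
  qed
  have m: "d * e' \<le> real (Suc n) * e"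
  proof -
    have "real ((Suc n - ?s) * exQ Q P (Suc n)) \<le> real (Suc n * exQ Q P n)"
      using ex_mono[OF her r2 H fQ, of n] by (rule of_nat_mono)
    then show ?thesis unfolding d_def e'_def e_def by (simp only: of_nat_mult)
  qed
  have "d * (e' * C) \<le> d * (e * C')"
  proof -
    have "d * (e' * C) = (d * e') * C" by simp
    also have "\<dots> \<le> (real (Suc n) * e) * C" using m C0 by (intro mult_right_mono) auto
    also have "\<dots> = e * (d * C')" using dC by simp
    also have "\<dots> = d * (e * C')" by simp
    finally show ?thesis .
  qed
  then have "e' * C \<le> e * C'" using d0 by simp
  then have "e' / C' \<le> e / C" using C0 C'0 by (simp add: divide_le_eq le_divide_eq field_simps)
  then show ?thesis by (simp add: aseq_def e'_def e_def C'_def C_def)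
qed

lemma piQ_props:
  assumes her: "hereditary r P" and r2: "2 \<le> r" and H: "H \<in> P" and Q: "is_rgraph r Q"
  shows "\<And>n. card (fst Q) \<le> n \<Longrightarrow> piQ Q P * real (n choose card (fst Q)) \<le> real (exQ Q P n)"
    and "piQ Q P \<le> cQ Q"
proof -
  let ?s = "card (fst Q)"
  have fQ: "finite (fst Q)" using Q by (simp add: is_rgraph_def)
  define b where "b i = aseq Q P (i + ?s)" for i
  have dec: "decseq b" unfolding decseq_Suc_iff b_def
    using aseq_dec[OF her r2 H fQ] by simp
  have b0: "\<forall>i. 0 \<le> b i" by (simp add: b_def aseq_def)
  obtain L where L: "b \<longlonglongrightarrow> L" "\<forall>i. L \<le> b i" using decseq_convergent[OF dec b0] by blast
  have "aseq Q P \<longlonglongrightarrow> L" using L(1) unfolding b_def by (rule LIMSEQ_offset)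
  then have piL: "piQ Q P = L" unfolding piQ_def aseq_def[abs_def] by (rule limI)
  show "piQ Q P * real (n choose ?s) \<le> real (exQ Q P n)" if n: "?s \<le> n" for n
  proof -
    have "piQ Q P \<le> aseq Q P n" using L(2)[rule_format, of "n - ?s"] piL n by (simp add: b_def)
    moreover have "real (n choose ?s) > 0" using n by simp
    ultimately show ?thesis by (simp add: aseq_def le_divide_eq)
  qed
  have "aseq Q P n \<le> cQ Q" for n
  proof -
    obtain H0 where H0: "H0 \<in> Pn P n" "copies Q H0 = exQ Q P n"
      using exQ_attained[OF her r2 H] by blast
    have fH: "fst H0 = {..<n}" using H0 by (simp add: Pn_def)
    have "real (exQ Q P n) \<le> cQ Q * real (n choose ?s)"
      using copies_le_cQ_total[OF Q r2, of H0] fH H0(2) by simp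
    moreover have "cQ Q \<ge> 0" by (simp add: cQ_def)
    ultimately show ?thesis
      by (cases "n choose ?s = 0") (simp_all add: aseq_def divide_le_eq)
  qed
  then show "piQ Q P \<le> cQ Q"
    using piL \<open>aseq Q P \<longlonglongrightarrow> L\<close> by (metis LIMSEQ_le_const2)
qed


definition Tset :: "hgraph \<Rightarrow> hgraph \<Rightarrow> nat set set" where
  "Tset Q H = {I. I \<subseteq> fst H \<and> card I = card (fst Q)}"

lemma polyQ_Tset: "polyQ Q H x = fact (card (fst Q)) *
     (\<Sum>I\<in>Tset Q H. real (copies Q (induced H I)) * (\<Prod>i\<in>I. x i))"
  by (simp add: polyQ_def Tset_def)

lemma Tset_finite: "finite (fst H) \<Longrightarrow> finite (Tset Q H)"
  unfolding Tset_def by (auto intro: finite_subset[of _ "Pow (fst H)"])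

lemma pnorm_one_iff:
  assumes p: "p > 0"
  shows "pnorm p V x = 1 \<longleftrightarrow> (\<Sum>i\<in>V. \<bar>x i\<bar> powr p) = 1"
proof
  let ?S = "\<Sum>i\<in>V. \<bar>x i\<bar> powr p"
  assume h: "pnorm p V x = 1"
  then have h': "?S powr (1 / p) = 1" by (simp add: pnorm_def)
  have S0: "?S \<ge> 0" by (intro sum_nonneg) simp
  have "?S \<noteq> 0" using h' by auto
  then have "?S = (?S powr (1 / p)) powr p" using S0 p by (simp add: powr_powr)
  then show "?S = 1" using h' by simp
next
  assume "(\<Sum>i\<in>V. \<bar>x i\<bar> powr p) = 1"
  then show "pnorm p V x = 1" by (simp add: pnorm_def)
qed

lemma pnorm_one_le:
  assumes p: "p > 0" and fV: "finite V" and h: "pnorm p V x = 1" and i: "i \<in> V"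
  shows "\<bar>x i\<bar> \<le> 1"
proof (rule ccontr)
  assume "\<not> \<bar>x i\<bar> \<le> 1"
  then have "1 < \<bar>x i\<bar> powr p" using p by simp
  also have "\<bar>x i\<bar> powr p \<le> (\<Sum>j\<in>V. \<bar>x j\<bar> powr p)"
    by (rule member_le_sum[OF i _ fV]) simp
  also have "\<dots> = 1" using h pnorm_one_iff[OF p] by simp
  finally show False by simp
qed

lemma polyQ_bdd:
  assumes p: "p > 0" and fH: "finite (fst H)"
  shows "bdd_above {polyQ Q H x | x. pnorm p (fst H) x = 1}"
proof (rule bdd_aboveI)
  fix y assume "y \<in> {polyQ Q H x | x. pnorm p (fst H) x = 1}"
  then obtain x where x: "pnorm p (fst H) x = 1" and y: "y = polyQ Q H x" by blast
  have "y \<le> fact (card (fst Q)) * (\<Sum>I\<in>Tset Q H. real (copies Q (induced H I)))"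
    unfolding y polyQ_Tset
  proof (intro mult_left_mono sum_mono)
    fix I assume I: "I \<in> Tset Q H"
    then have IH: "I \<subseteq> fst H" by (simp add: Tset_def)
    have "(\<Prod>i\<in>I. x i) \<le> \<bar>\<Prod>i\<in>I. x i\<bar>" by simp
    also have "\<dots> = (\<Prod>i\<in>I. \<bar>x i\<bar>)" by (rule abs_prod)
    also have "\<dots> \<le> 1"
      by (rule prod_le_1) (use pnorm_one_le[OF p fH x] IH in auto)
    finally have "(\<Prod>i\<in>I. x i) \<le> 1" .
    then show "real (copies Q (induced H I)) * (\<Prod>i\<in>I. x i) \<le> real (copies Q (induced H I))"
      by (simp add: mult_left_le)
  qed simp
  then show "y \<le> fact (card (fst Q)) * (\<Sum>I\<in>Tset Q H. real (copies Q (induced H I)))" .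
qed

lemma polyQ_le_lamQ:
  assumes p: "p > 0" and fH: "finite (fst H)" and z: "pnorm p (fst H) z = 1"
  shows "polyQ Q H z \<le> lamQ p Q H"
  unfolding lamQ_def by (rule cSup_upper[OF _ polyQ_bdd[OF p fH]]) (use z in blast)

lemma lamQ_uniform:
  assumes p: "p > 0" and fQ: "finite (fst Q)" and fH: "fst H = {..<n}" and n: "n \<ge> 1"
  shows "fact (card (fst Q)) * real (copies Q H) * real n powr (- real (card (fst Q)) / p) \<le> lamQ p Q H"
proof -
  let ?s = "card (fst Q)"
  define u where "u = real n powr (- 1 / p)"
  have n0: "real n > 0" using n by simp
  have u0: "u > 0" using n0 by (simp add: u_def)
  have "pnorm p (fst H) (\<lambda>i. u) = 1"
  proof -
    have "(\<Sum>i\<in>fst H. \<bar>u\<bar> powr p) = real n * (u powr p)" using fH u0 by simp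
    also have "u powr p = real n powr (- 1)" using p by (simp add: u_def powr_powr)
    also have "real n * real n powr (- 1) = 1" using n0 by (simp add: powr_minus)
    finally show ?thesis using pnorm_one_iff[OF p] by simp
  qed
  then have "polyQ Q H (\<lambda>i. u) \<le> lamQ p Q H" using polyQ_le_lamQ[OF p] fH by simp
  moreover have "polyQ Q H (\<lambda>i. u) = fact ?s * real (copies Q H) * real n powr (- real ?s / p)"
  proof -
    have "polyQ Q H (\<lambda>i. u) = fact ?s * (\<Sum>I\<in>Tset Q H. real (copies Q (induced H I)) * u ^ ?s)"
      unfolding polyQ_Tset by (intro arg_cong2[where f="(*)"] refl sum.cong) (auto simp: Tset_def)
    also have "\<dots> = fact ?s * u ^ ?s * (\<Sum>I\<in>Tset Q H. real (copies Q (induced H I)))"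
      by (simp add: sum_distrib_left[symmetric] algebra_simps)
    also have "(\<Sum>I\<in>Tset Q H. real (copies Q (induced H I))) = real (copies Q H)"
      using copies_decomp[of H Q] fH fQ by (simp add: Tset_def)
    also have "u ^ ?s = real n powr (- real ?s / p)"
    proof -
      have "u ^ ?s = u powr real ?s" using u0 by (simp add: powr_realpow)
      also have "\<dots> = real n powr (- 1 / p * real ?s)" by (simp add: u_def powr_powr)
      finally show ?thesis by simp
    qed
    finally show ?thesis by simp
  qed
  ultimately show ?thesis by simp
qed

lemma lamQ_prop_ge:
  assumes her: "hereditary r P" and r2: "2 \<le> r" and H: "H \<in> P" and p: "p > 0"
    and fQ: "finite (fst Q)" and n: "n \<ge> 1"
  shows "fact (card (fst Q)) * real (exQ Q P n) * real n powr (- real (card (fst Q)) / p) \<le> lamQ_prop p Q P n"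
proof -
  obtain H0 where H0: "H0 \<in> Pn P n" "copies Q H0 = exQ Q P n"
    using exQ_attained[OF her r2 H] by blast
  have fH: "fst H0 = {..<n}" using H0 by (simp add: Pn_def)
  have "fact (card (fst Q)) * real (exQ Q P n) * real n powr (- real (card (fst Q)) / p) \<le> lamQ p Q H0"
    using lamQ_uniform[OF p fQ fH n] H0(2) by simp
  also have "\<dots> \<le> lamQ_prop p Q P n" unfolding lamQ_prop_def
    by (rule cSup_upper) (use H0(1) Pn_finite[OF her] in auto)
  finally show ?thesis .
qed


definition Rv :: "hgraph \<Rightarrow> hgraph \<Rightarrow> nat \<Rightarrow> (nat \<Rightarrow> real) \<Rightarrow> real" where
  "Rv Q H v x = fact (card (fst Q)) *
     (\<Sum>I\<in>{I \<in> Tset Q H. v \<notin> I}. real (copies Q (induced H I)) * (\<Prod>i\<in>I. x i))"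

definition Bv :: "hgraph \<Rightarrow> hgraph \<Rightarrow> nat \<Rightarrow> (nat \<Rightarrow> real) \<Rightarrow> real" where
  "Bv Q H v x = fact (card (fst Q)) *
     (\<Sum>I\<in>{I \<in> Tset Q H. v \<in> I}. real (copies Q (induced H I)) * (\<Prod>i\<in>I - {v}. x i))"

lemma polyQ_split:
  assumes fH: "finite (fst H)"
  shows "polyQ Q H x = Rv Q H v x + x v * Bv Q H v x"
proof -
  let ?T = "Tset Q H"
  let ?f = "\<lambda>I. real (copies Q (induced H I)) * (\<Prod>i\<in>I. x i)"
  have fT: "finite ?T" by (rule Tset_finite[OF fH])
  have split: "?T = {I \<in> ?T. v \<in> I} \<union> {I \<in> ?T. v \<notin> I}" by auto
  have "sum ?f ?T = sum ?f {I \<in> ?T. v \<in> I} + sum ?f {I \<in> ?T. v \<notin> I}"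
    by (subst split, rule sum.union_disjoint) (use fT in auto)
  also have "sum ?f {I \<in> ?T. v \<in> I} =
      x v * (\<Sum>I\<in>{I \<in> ?T. v \<in> I}. real (copies Q (induced H I)) * (\<Prod>i\<in>I - {v}. x i))"
  proof -
    have "sum ?f {I \<in> ?T. v \<in> I} =
        (\<Sum>I\<in>{I \<in> ?T. v \<in> I}. x v * (real (copies Q (induced H I)) * (\<Prod>i\<in>I - {v}. x i)))"
    proof (rule sum.cong[OF refl])
      fix I assume I: "I \<in> {I \<in> ?T. v \<in> I}"
      then have "finite I" "v \<in> I" using fH by (auto simp: Tset_def intro: finite_subset)
      then have "(\<Prod>i\<in>I. x i) = x v * (\<Prod>i\<in>I - {v}. x i)" by (rule prod.remove)
      then show "?f I = x v * (real (copies Q (induced H I)) * (\<Prod>i\<in>I - {v}. x i))" by simp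
    qed
    then show ?thesis by (simp add: sum_distrib_left)
  qed
  finally show ?thesis unfolding polyQ_Tset Rv_def Bv_def by (simp add: algebra_simps)
qed

lemma Rv_upd: "Rv Q H v (x(v := t)) = Rv Q H v x"
  unfolding Rv_def
  by (intro arg_cong2[where f="(*)"] refl sum.cong arg_cong2[where f="(*)"] prod.cong) auto

lemma Bv_upd: "Bv Q H v (x(v := t)) = Bv Q H v x"
  unfolding Bv_def
  by (intro arg_cong2[where f="(*)"] refl sum.cong arg_cong2[where f="(*)"] prod.cong) auto

lemma polyQ_homog:
  assumes fH: "finite (fst H)"
  shows "polyQ Q H (\<lambda>i. c * y i) = c ^ card (fst Q) * polyQ Q H y"
proof -
  have "(\<Prod>i\<in>I. c * y i) = c ^ card (fst Q) * (\<Prod>i\<in>I. y i)" if "I \<in> Tset Q H" for I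
    using that by (simp add: prod.distrib Tset_def)
  then have "(\<Sum>I\<in>Tset Q H. real (copies Q (induced H I)) * (\<Prod>i\<in>I. c * y i)) =
      (\<Sum>I\<in>Tset Q H. c ^ card (fst Q) * (real (copies Q (induced H I)) * (\<Prod>i\<in>I. y i)))"
    by (intro sum.cong) auto
  also have "\<dots> = c ^ card (fst Q) * (\<Sum>I\<in>Tset Q H. real (copies Q (induced H I)) * (\<Prod>i\<in>I. y i))"
    by (rule sum_distrib_left[symmetric])
  finally show ?thesis unfolding polyQ_Tset by (simp only: mult.left_commute)
qed

lemma lagrange:
  assumes p: "p > 1" and fH: "finite (fst H)" and v: "v \<in> fst H"
    and x0: "\<forall>i\<in>fst H. 0 \<le> x i" and xn: "pnorm p (fst H) x = 1" and lam: "polyQ Q H x = lamQ p Q H"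
    and a0: "x v > 0"
  shows "Bv Q H v x = real (card (fst Q)) * lamQ p Q H * x v powr (p - 1)"
proof -
  let ?s = "card (fst Q)"
  define L where "L = lamQ p Q H"
  define a where "a = x v"
  define R where "R = Rv Q H v x"
  define B where "B = Bv Q H v x"
  have p0: "p > 0" using p by simp
  define T where "T t = 1 - a powr p + t powr p" for t
  have sum1: "(\<Sum>i\<in>fst H. \<bar>x i\<bar> powr p) = 1" using xn pnorm_one_iff[OF p0] by simp
  have rest: "(\<Sum>i\<in>fst H - {v}. \<bar>x i\<bar> powr p) = 1 - a powr p"
  proof -
    have "(\<Sum>i\<in>fst H. \<bar>x i\<bar> powr p) = \<bar>x v\<bar> powr p + (\<Sum>i\<in>fst H - {v}. \<bar>x i\<bar> powr p)"
      by (rule sum.remove[OF fH v])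
    then show ?thesis using sum1 a0 by (simp add: a_def)
  qed
  have rest0: "1 - a powr p \<ge> 0" using rest[symmetric] by (simp add: sum_nonneg)
  have Tsum: "(\<Sum>i\<in>fst H. \<bar>(x(v := t)) i\<bar> powr p) = T t" if "t \<ge> 0" for t
  proof -
    have "(\<Sum>i\<in>fst H. \<bar>(x(v := t)) i\<bar> powr p) = \<bar>t\<bar> powr p + (\<Sum>i\<in>fst H - {v}. \<bar>(x(v := t)) i\<bar> powr p)"
      using sum.remove[OF fH v, of "\<lambda>i. \<bar>(x(v := t)) i\<bar> powr p"] by simp
    also have "(\<Sum>i\<in>fst H - {v}. \<bar>(x(v := t)) i\<bar> powr p) = (\<Sum>i\<in>fst H - {v}. \<bar>x i\<bar> powr p)"
      by (rule sum.cong) auto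
    finally show ?thesis using rest that by (simp add: T_def)
  qed
  have Tpos: "T t > 0" if "t > 0" for t
  proof -
    have tp: "t powr p > 0" using that by simp
    show ?thesis unfolding T_def using tp rest0 by linarith
  qed
  have key: "R + t * B \<le> L * T t powr (real ?s / p)" if t: "t > 0" for t
  proof -
    define y where "y = x(v := t)"
    have py: "polyQ Q H y = R + t * B"
      unfolding y_def R_def B_def using polyQ_split[OF fH, where x="x(v := t)" and v=v] by (simp add: Rv_upd Bv_upd)
    define \<rho> where "\<rho> = T t powr (1 / p)"
    have \<rho>0: "\<rho> > 0" using Tpos[OF t] by (simp add: \<rho>_def)
    have \<rho>p: "\<rho> powr p = T t" using Tpos[OF t] p0 by (simp add: \<rho>_def powr_powr)
    define z where "z i = (1 / \<rho>) * y i" for i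
    have "(\<Sum>i\<in>fst H. \<bar>z i\<bar> powr p) = (\<Sum>i\<in>fst H. (1 / \<rho>) powr p * \<bar>y i\<bar> powr p)"
    proof (rule sum.cong[OF refl])
      fix i assume "i \<in> fst H"
      have "\<bar>z i\<bar> = (1 / \<rho>) * \<bar>y i\<bar>" using \<rho>0 by (simp add: z_def abs_mult)
      then show "\<bar>z i\<bar> powr p = (1 / \<rho>) powr p * \<bar>y i\<bar> powr p" by (simp only: powr_mult)
    qed
    also have "\<dots> = (1 / \<rho>) powr p * (\<Sum>i\<in>fst H. \<bar>y i\<bar> powr p)" by (rule sum_distrib_left[symmetric])
    also have "(\<Sum>i\<in>fst H. \<bar>y i\<bar> powr p) = T t" unfolding y_def using Tsum[of t] t by simp
    also have "(1 / \<rho>) powr p = 1 / T t" using \<rho>p \<rho>0 by (simp add: powr_divide)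
    also have "1 / T t * T t = 1" using Tpos[OF t] by simp
    finally have "pnorm p (fst H) z = 1" using pnorm_one_iff[OF p0] by simp
    then have "polyQ Q H z \<le> L" unfolding L_def by (rule polyQ_le_lamQ[OF p0 fH])
    moreover have "polyQ Q H z = (1 / \<rho>) ^ ?s * polyQ Q H y"
      unfolding z_def by (rule polyQ_homog[OF fH])
    ultimately have "(1 / \<rho>) ^ ?s * (R + t * B) \<le> L" using py by simp
    then have "R + t * B \<le> L * \<rho> ^ ?s" using \<rho>0 by (simp add: field_simps power_divide)
    also have "\<rho> ^ ?s = T t powr (real ?s / p)"
    proof -
      have "\<rho> ^ ?s = \<rho> powr real ?s" using \<rho>0 by (simp add: powr_realpow)
      also have "\<dots> = T t powr (1 / p * real ?s)" by (simp add: \<rho>_def powr_powr)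
      finally show ?thesis by simp
    qed
    finally show ?thesis .
  qed
  define f where "f h = L * T (a + h) powr (real ?s / p) - (R + (a + h) * B)" for h
  have Ta: "T a = 1" by (simp add: T_def)
  have f0: "f 0 = 0"
  proof -
    have "polyQ Q H x = R + a * B" unfolding R_def B_def a_def by (rule polyQ_split[OF fH])
    then show ?thesis using lam Ta by (simp add: f_def L_def)
  qed
  have fmin: "\<forall>h. \<bar>0 - h\<bar> < a \<longrightarrow> f 0 \<le> f h"
  proof (intro allI impI)
    fix h assume "\<bar>0 - h\<bar> < a"
    then have "a + h > 0" by simp
    then show "f 0 \<le> f h" using key[of "a + h"] f0 by (simp add: f_def)
  qed
  have d1: "DERIV (\<lambda>h. a + h) 0 :> 1" by (auto intro!: derivative_eq_intros)
  have d2: "DERIV (\<lambda>h. (a + h) powr p) 0 :> p * (a + 0) powr (p - of_nat 1) * 1"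
    by (rule DERIV_fun_powr[OF d1]) (use a0 in \<open>simp add: a_def\<close>)
  have dT: "DERIV (\<lambda>h. T (a + h)) 0 :> p * a powr (p - 1)"
  proof -
    have "DERIV (\<lambda>h. (1 - a powr p) + (a + h) powr p) 0 :> 0 + p * (a + 0) powr (p - of_nat 1) * 1"
      by (rule DERIV_add[OF DERIV_const d2])
    then show ?thesis by (simp add: T_def)
  qed
  have dP: "DERIV (\<lambda>h. T (a + h) powr (real ?s / p)) 0 :>
      (real ?s / p) * T (a + 0) powr (real ?s / p - of_nat 1) * (p * a powr (p - 1))"
    by (rule DERIV_fun_powr[OF dT]) (use Tpos a0 in \<open>simp add: a_def\<close>)
  have dL: "DERIV (\<lambda>h. R + (a + h) * B) 0 :> B" by (auto intro!: derivative_eq_intros)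
  have df: "DERIV f 0 :> L * ((real ?s / p) * T (a + 0) powr (real ?s / p - of_nat 1) * (p * a powr (p - 1))) - B"
    unfolding f_def by (rule DERIV_diff[OF DERIV_cmult[OF dP] dL])
  have "L * ((real ?s / p) * T (a + 0) powr (real ?s / p - of_nat 1) * (p * a powr (p - 1))) - B = 0"
    by (rule DERIV_local_min[OF df _ fmin]) (use a0 in \<open>simp add: a_def\<close>)
  then have "B = L * ((real ?s / p) * (p * a powr (p - 1)))" using Ta by simp
  also have "\<dots> = real ?s * L * a powr (p - 1)" using p0 by (simp add: field_simps)
  finally show ?thesis by (simp add: B_def L_def a_def)
qed


definition Sk :: "nat set \<Rightarrow> nat \<Rightarrow> nat set set" where
  "Sk W k = {J. J \<subseteq> W \<and> card J = k}"

lemma Sk_finite: "finite W \<Longrightarrow> finite (Sk W k)"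
  unfolding Sk_def by (auto intro: finite_subset[of _ "Pow W"])

lemma insert_bij:
  assumes fW: "finite W" and i: "i \<in> W"
  shows "bij_betw (insert i) (Sk (W - {i}) k) {K \<in> Sk W (Suc k). i \<in> K}"
proof (rule bij_betw_imageI)
  show "inj_on (insert i) (Sk (W - {i}) k)"
  proof (rule inj_onI)
    fix J1 J2 assume "J1 \<in> Sk (W - {i}) k" "J2 \<in> Sk (W - {i}) k" "insert i J1 = insert i J2"
    then have "i \<notin> J1" "i \<notin> J2" "insert i J1 = insert i J2" by (auto simp: Sk_def)
    then show "J1 = J2" using insert_ident[of i J1 J2] by simp
  qed
  show "insert i ` Sk (W - {i}) k = {K \<in> Sk W (Suc k). i \<in> K}"
  proof (intro equalityI subsetI)
    fix K assume "K \<in> insert i ` Sk (W - {i}) k"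
    then obtain J where J: "J \<subseteq> W - {i}" "card J = k" "K = insert i J" by (auto simp: Sk_def)
    have "finite J" using J(1) fW finite_subset by blast
    moreover have "i \<notin> J" using J(1) by blast
    ultimately have "card K = Suc k" using J by simp
    then show "K \<in> {K \<in> Sk W (Suc k). i \<in> K}" using J i by (auto simp: Sk_def)
  next
    fix K assume K: "K \<in> {K \<in> Sk W (Suc k). i \<in> K}"
    then have KW: "K \<subseteq> W" "card K = Suc k" "i \<in> K" by (auto simp: Sk_def)
    have "finite K" using KW(1) fW finite_subset by blast
    then have "card (K - {i}) = k" using KW by simp
    moreover have "K - {i} \<subseteq> W - {i}" using KW by blast
    moreover have "K = insert i (K - {i})" using KW by blast
    ultimately show "K \<in> insert i ` Sk (W - {i}) k" unfolding Sk_def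
      by (intro image_eqI[of _ _ "K - {i}"]) simp_all
  qed
qed

lemma sum_remove_reindex:
  assumes fW: "finite W" and i: "i \<in> W"
  shows "(\<Sum>K\<in>{K \<in> Sk W (Suc k). i \<in> K}. f (K - {i})) = (\<Sum>J\<in>Sk (W - {i}) k. f J)"
proof -
  have "(\<Sum>J\<in>Sk (W - {i}) k. f (insert i J - {i})) = (\<Sum>K\<in>{K \<in> Sk W (Suc k). i \<in> K}. f (K - {i}))"
    by (rule sum.reindex_bij_betw[OF insert_bij[OF fW i]])
  moreover have "(\<Sum>J\<in>Sk (W - {i}) k. f (insert i J - {i})) = (\<Sum>J\<in>Sk (W - {i}) k. f J)"
  proof (rule sum.cong[OF refl])
    fix J assume "J \<in> Sk (W - {i}) k"
    then have "i \<notin> J" by (auto simp: Sk_def)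
    then show "f (insert i J - {i}) = f J" by simp
  qed
  ultimately show ?thesis by simp
qed

lemma card_Sk_remove:
  assumes fW: "finite W" and i: "i \<in> W"
  shows "card {K \<in> Sk W (Suc k). i \<in> K} = card W - 1 choose k"
proof -
  have "card {K \<in> Sk W (Suc k). i \<in> K} = card (Sk (W - {i}) k)"
    using bij_betw_same_card[OF insert_bij[OF fW i]] by simp
  also have "\<dots> = card (W - {i}) choose k" unfolding Sk_def by (rule n_subsets) (use fW in simp)
  finally show ?thesis using i fW by simp
qed

definition esym :: "(nat \<Rightarrow> real) \<Rightarrow> nat set \<Rightarrow> nat \<Rightarrow> real" where
  "esym x W k = (\<Sum>J\<in>Sk W k. \<Prod>j\<in>J. x j)"

lemma esym_nonneg: "(\<And>i. i \<in> W \<Longrightarrow> 0 \<le> x i) \<Longrightarrow> 0 \<le> esym x W k"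
  unfolding esym_def Sk_def by (intro sum_nonneg prod_nonneg) auto

lemma esym_le_pow:
  assumes fW: "finite W" and x0: "\<And>i. i \<in> W \<Longrightarrow> 0 \<le> x i"
  shows "fact k * esym x W k \<le> (\<Sum>i\<in>W. x i) ^ k"
proof (induction k)
  case 0
  have "Sk W 0 = {{}}"
  proof (intro equalityI subsetI)
    fix J assume "J \<in> Sk W 0"
    then have "J \<subseteq> W" "card J = 0" by (auto simp: Sk_def)
    moreover have "finite J" using \<open>J \<subseteq> W\<close> fW finite_subset by blast
    ultimately show "J \<in> {{}}" by simp
  qed (auto simp: Sk_def)
  then show ?case by (simp add: esym_def)
next
  case (Suc k)
  let ?S = "\<Sum>i\<in>W. x i"
  have S0: "?S \<ge> 0" using x0 by (simp add: sum_nonneg)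
  have step: "real (Suc k) * esym x W (Suc k) \<le> ?S * esym x W k"
  proof -
    have "real (Suc k) * esym x W (Suc k) = (\<Sum>K\<in>Sk W (Suc k). \<Sum>i\<in>K. x i * (\<Prod>j\<in>K - {i}. x j))"
      unfolding esym_def sum_distrib_left
    proof (rule sum.cong[OF refl])
      fix K assume K: "K \<in> Sk W (Suc k)"
      then have fK: "finite K" and cK: "card K = Suc k" using fW by (auto simp: Sk_def intro: finite_subset)
      have "(\<Sum>i\<in>K. x i * (\<Prod>j\<in>K - {i}. x j)) = (\<Sum>i\<in>K. \<Prod>j\<in>K. x j)"
        by (rule sum.cong[OF refl], rule prod.remove[symmetric]) (use fK in auto)
      then show "real (Suc k) * (\<Prod>j\<in>K. x j) = (\<Sum>i\<in>K. x i * (\<Prod>j\<in>K - {i}. x j))" using cK by simp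
    qed
    also have "\<dots> = (\<Sum>i\<in>W. \<Sum>K\<in>{K \<in> Sk W (Suc k). i \<in> K}. x i * (\<Prod>j\<in>K - {i}. x j))"
    proof -
      have "(\<Sum>K\<in>Sk W (Suc k). \<Sum>i\<in>K. x i * (\<Prod>j\<in>K - {i}. x j)) =
          (\<Sum>K\<in>Sk W (Suc k). \<Sum>i\<in>{i \<in> W. i \<in> K}. x i * (\<Prod>j\<in>K - {i}. x j))"
      proof (rule sum.cong[OF refl])
        fix K assume "K \<in> Sk W (Suc k)"
        then have "{i \<in> W. i \<in> K} = K" by (auto simp: Sk_def)
        then show "(\<Sum>i\<in>K. x i * (\<Prod>j\<in>K - {i}. x j)) = (\<Sum>i\<in>{i \<in> W. i \<in> K}. x i * (\<Prod>j\<in>K - {i}. x j))"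
          by simp
      qed
      also have "\<dots> = (\<Sum>i\<in>W. \<Sum>K\<in>{K \<in> Sk W (Suc k). i \<in> K}. x i * (\<Prod>j\<in>K - {i}. x j))"
        by (rule sum.swap_restrict[OF Sk_finite[OF fW] fW])
      finally show ?thesis .
    qed
    also have "\<dots> = (\<Sum>i\<in>W. x i * esym x (W - {i}) k)"
    proof (rule sum.cong[OF refl])
      fix i assume i: "i \<in> W"
      have "(\<Sum>K\<in>{K \<in> Sk W (Suc k). i \<in> K}. x i * (\<Prod>j\<in>K - {i}. x j)) =
          (\<Sum>J\<in>Sk (W - {i}) k. x i * (\<Prod>j\<in>J. x j))"
        by (rule sum_remove_reindex[OF fW i, where f="\<lambda>J. x i * (\<Prod>j\<in>J. x j)"])
      then show "(\<Sum>K\<in>{K \<in> Sk W (Suc k). i \<in> K}. x i * (\<Prod>j\<in>K - {i}. x j)) = x i * esym x (W - {i}) k"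
        by (simp add: esym_def sum_distrib_left)
    qed
    also have "\<dots> \<le> (\<Sum>i\<in>W. x i * esym x W k)"
    proof (rule sum_mono)
      fix i assume i: "i \<in> W"
      have "esym x (W - {i}) k \<le> esym x W k" unfolding esym_def
      proof (rule sum_mono2[OF Sk_finite[OF fW]])
        show "Sk (W - {i}) k \<subseteq> Sk W k" by (auto simp: Sk_def)
        show "\<And>b. b \<in> Sk W k - Sk (W - {i}) k \<Longrightarrow> 0 \<le> (\<Prod>j\<in>b. x j)"
          using x0 by (auto simp: Sk_def intro!: prod_nonneg)
      qed
      then show "x i * esym x (W - {i}) k \<le> x i * esym x W k" using x0[OF i] by (rule mult_left_mono)
    qed
    also have "\<dots> = ?S * esym x W k" by (simp add: sum_distrib_right)
    finally show ?thesis .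
  qed
  have "fact (Suc k) * esym x W (Suc k) = fact k * (real (Suc k) * esym x W (Suc k))" by simp
  also have "\<dots> \<le> fact k * (?S * esym x W k)" using step by (intro mult_left_mono) auto
  also have "\<dots> = ?S * (fact k * esym x W k)" by simp
  also have "\<dots> \<le> ?S * ?S ^ k" using Suc S0 by (intro mult_left_mono)
  finally show ?case by simp
qed

lemma power_mean:
  assumes p: "p \<ge> 1" and fW: "finite W" and ne: "W \<noteq> {}" and x0: "\<And>i. i \<in> W \<Longrightarrow> 0 < x i"
  shows "(\<Sum>i\<in>W. x i) \<le> real (card W) * ((\<Sum>i\<in>W. x i powr p) / real (card W)) powr (1 / p)"
proof -
  let ?N = "real (card W)"
  have N0: "?N > 0" using fW ne by (simp add: card_gt_0_iff)
  have "(\<lambda>t. t powr p) (\<Sum>i\<in>W. (1 / ?N) *\<^sub>R x i) \<le> (\<Sum>i\<in>W. (1 / ?N) * (x i powr p))"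
    by (rule convex_on_sum[OF fW ne powr_convex[OF p]]) (use N0 x0 in auto)
  then have h: "((\<Sum>i\<in>W. x i) / ?N) powr p \<le> (\<Sum>i\<in>W. x i powr p) / ?N"
    by (simp add: sum_distrib_left[symmetric] sum_divide_distrib[symmetric])
  have S0: "(\<Sum>i\<in>W. x i) / ?N \<ge> 0" using x0 N0 by (simp add: sum_nonneg less_imp_le)
  have "(((\<Sum>i\<in>W. x i) / ?N) powr p) powr (1 / p) = ((\<Sum>i\<in>W. x i) / ?N) powr (p * (1 / p))"
    by (rule powr_powr)
  also have "p * (1 / p) = 1" using p by simp
  also have "((\<Sum>i\<in>W. x i) / ?N) powr 1 = (\<Sum>i\<in>W. x i) / ?N" by (rule powr_one[OF S0])
  finally have "(\<Sum>i\<in>W. x i) / ?N = (((\<Sum>i\<in>W. x i) / ?N) powr p) powr (1 / p)" by simp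
  also have "\<dots> \<le> ((\<Sum>i\<in>W. x i powr p) / ?N) powr (1 / p)"
    using h p by (intro powr_mono2) auto
  finally show ?thesis using N0 by (simp add: divide_le_eq mult.commute)
qed


lemma fact_binom_lower:
  "k \<le> n \<Longrightarrow> real (n - k) ^ k \<le> fact k * real (n choose k)"
proof (induction k arbitrary: n)
  case 0 then show ?case by simp
next
  case (Suc k)
  have kn: "k \<le> n - 1" using Suc.prems by simp
  have IH: "real (n - 1 - k) ^ k \<le> fact k * real (n - 1 choose k)" using Suc.IH[OF kn] .
  have abs: "real (Suc k) * real (n choose Suc k) = real n * real (n - 1 choose k)"
    using binomial_absorption[of k n] by (metis of_nat_mult)
  have "n - 1 - k = n - Suc k" by simp
  then have "real (n - Suc k) ^ Suc k = real (n - Suc k) * real (n - 1 - k) ^ k" by simp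
  also have "\<dots> \<le> real n * (fact k * real (n - 1 choose k))"
    using IH by (intro mult_mono) auto
  also have "\<dots> = fact k * (real (Suc k) * real (n choose Suc k))" using abs by simp
  also have "\<dots> = fact (Suc k) * real (n choose Suc k)" by simp
  finally show ?case .
qed

lemma degree_bound:
  fixes p pi e' :: real and k n :: nat and x :: "nat \<Rightarrow> real"
  assumes p: "p > 1" and Q: "is_rgraph r Q" and r2: "2 \<le> r" and sk: "card (fst Q) = Suc k"
    and fH: "fst H = {..<n}" and nk: "Suc (Suc k) \<le> n"
    and lamb: "fact (Suc k) * pi * real (n choose Suc k) * real n powr (- real (Suc k) / p) \<le> lamQ p Q H"
    and pi0: "0 < pi"
    and pe: "principal_eigvec p Q H x"
    and xm: "(1 - e') / real n \<le> xmin H x powr p" and e'1: "e' < 1"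
    and v: "v \<in> fst H"
  shows "real (n - 1 choose k) * (pi * (real n * xmin H x powr p) * ((real n * xmin H x powr p) powr (- 1 / p)) ^ (k + 1)
           - cQ Q * (((real n * xmin H x powr p) powr (- 1 / p)) ^ k - 1))
         - cQ Q * ((real n * xmin H x powr p) powr (- 1 / p)) ^ k * (real n ^ k / fact k - real (n - 1 choose k))
         \<le> real (Qdeg Q H v)"
proof -
  let ?V = "fst H"
  let ?s = "Suc k"
  define m where "m = xmin H x"
  define \<mu> where "\<mu> = real n * m powr p"
  define X where "X = \<mu> powr (- 1 / p)"
  define c where "c = cQ Q"
  define L where "L = lamQ p Q H"
  define A where "A = (fact ?s :: real)"
  define C where "C = real (n - 1 choose k)"
  have p0: "p > 0" using p by simp
  have fV: "finite ?V" using fH by simp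
  have cV: "card ?V = n" using fH by simp
  have "0 \<in> ?V" using fH nk by simp
  then have Vne: "?V \<noteq> {}" by blast
  have n0: "real n > 0" using nk by simp
  have x0: "\<forall>i\<in>?V. 0 \<le> x i" and xn: "pnorm p ?V x = 1" and lamx: "polyQ Q H x = L"
    using pe by (auto simp: principal_eigvec_def L_def)
  have m_le: "\<And>i. i \<in> ?V \<Longrightarrow> m \<le> x i" unfolding m_def xmin_def using fV by simp
  have m0: "m \<ge> 0" using Min_in[of "x ` ?V"] fV Vne x0 unfolding m_def xmin_def by fastforce
  have "(1 - e') / real n > 0" using e'1 n0 by simp
  then have "m powr p > 0" using xm unfolding m_def by linarith
  then have mpos: "m > 0" using m0 by (cases "m = 0") auto
  have sum1: "(\<Sum>i\<in>?V. x i powr p) = 1"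
  proof -
    have "(\<Sum>i\<in>?V. \<bar>x i\<bar> powr p) = 1" using xn pnorm_one_iff[OF p0] by simp
    moreover have "(\<Sum>i\<in>?V. \<bar>x i\<bar> powr p) = (\<Sum>i\<in>?V. x i powr p)" using x0 by (intro sum.cong) auto
    ultimately show ?thesis by simp
  qed
  have mu1: "\<mu> \<le> 1"
  proof -
    have "(\<Sum>i\<in>?V. m powr p) \<le> (\<Sum>i\<in>?V. x i powr p)"
      using m_le m0 p0 by (intro sum_mono powr_mono2) auto
    then show ?thesis using sum1 cV by (simp add: \<mu>_def)
  qed
  have mu0: "\<mu> > 0" using mpos n0 by (simp add: \<mu>_def)
  have xv: "x v \<ge> m" using m_le v by simp
  have B: "Bv Q H v x = real ?s * L * x v powr (p - 1)"
    using lagrange[OF p fV v x0 xn] lamx mpos xv sk by (simp add: L_def)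
  have L0: "L \<ge> 0"
  proof -
    have "0 \<le> fact (Suc k) * pi * real (n choose Suc k) * real n powr (- real (Suc k) / p)"
      using pi0 by simp
    then show ?thesis using lamb by (simp add: L_def)
  qed
  have Blow: "real ?s * (A * pi * real (n choose ?s) * real n powr (- real ?s / p)) * m powr (p - 1) \<le> Bv Q H v x"
  proof -
    have "m powr (p - 1) \<le> x v powr (p - 1)" using xv m0 p by (intro powr_mono2) auto
    then have "real ?s * L * m powr (p - 1) \<le> real ?s * L * x v powr (p - 1)"
      using L0 by (intro mult_left_mono) auto
    moreover have "real ?s * (A * pi * real (n choose ?s) * real n powr (- real ?s / p)) * m powr (p - 1)
        \<le> real ?s * L * m powr (p - 1)"
      using lamb mpos by (intro mult_right_mono mult_left_mono) (auto simp: A_def L_def)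
    ultimately show ?thesis using B by simp
  qed
  define Tv where "Tv = {I \<in> Tset Q H. v \<in> I}"
  define N where "N I = real (copies Q (induced H I))" for I
  define P where "P I = (\<Prod>i\<in>I - {v}. x i)" for I
  have TS: "Tset Q H = Sk ?V ?s" by (simp add: Tset_def Sk_def sk)
  have fTv: "finite Tv" unfolding Tv_def using Tset_finite[OF fV] by simp
  have Bdef: "Bv Q H v x = A * (\<Sum>I\<in>Tv. N I * P I)"
    by (simp add: Bv_def A_def sk Tv_def N_def P_def)
  have Pge: "m ^ k \<le> P I" if "I \<in> Tv" for I
  proof -
    have I: "I \<subseteq> ?V" "card I = ?s" "v \<in> I" using that by (auto simp: Tv_def Tset_def sk)
    have fI: "finite I" using I(1) fV finite_subset by blast
    have "card (I - {v}) = k" using I fI by simp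
    then have "m ^ k = (\<Prod>i\<in>I - {v}. m)" by simp
    also have "\<dots> \<le> P I" unfolding P_def using I m_le m0 by (intro prod_mono) auto
    finally show ?thesis .
  qed
  have Nle: "N I \<le> c" if "I \<in> Tv" for I
  proof -
    have I: "I \<subseteq> ?V" "card I = card (fst Q)" using that by (auto simp: Tv_def Tset_def)
    have "finite I" using I(1) fV finite_subset by blast
    then show ?thesis unfolding N_def c_def induced_def using copies_le_cQ[OF Q r2 _ I(2)] by blast
  qed
  have N0: "N I \<ge> 0" for I by (simp add: N_def)
  have dsum: "real (Qdeg Q H v) = (\<Sum>I\<in>Tv. N I)"
  proof -
    have "{I. I \<subseteq> ?V \<and> card I = card (fst Q) \<and> v \<in> I} = Tv" by (auto simp: Tv_def Tset_def)
    then show ?thesis by (simp add: Qdeg_def N_def)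
  qed
  have cardTv: "card Tv = n - 1 choose k"
    unfolding Tv_def TS using card_Sk_remove[OF fV v, of k] cV by simp
  define E where "E = esym x (?V - {v}) k"
  have Esum: "(\<Sum>I\<in>Tv. P I) = E"
    unfolding Tv_def TS E_def esym_def P_def by (rule sum_remove_reindex[OF fV v])
  have termwise: "N I * P I \<le> N I * m ^ k + c * (P I - m ^ k)" if "I \<in> Tv" for I
  proof -
    have "N I * (P I - m ^ k) \<le> c * (P I - m ^ k)"
      using Nle[OF that] Pge[OF that] by (intro mult_right_mono) auto
    then show ?thesis by (simp add: algebra_simps)
  qed
  have up: "(\<Sum>I\<in>Tv. N I * P I) \<le> real (Qdeg Q H v) * m ^ k + c * (E - C * m ^ k)"
  proof -
    have "(\<Sum>I\<in>Tv. N I * P I) \<le> (\<Sum>I\<in>Tv. N I * m ^ k + c * (P I - m ^ k))"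
      using termwise by (rule sum_mono)
    also have "\<dots> = (\<Sum>I\<in>Tv. N I) * m ^ k + c * ((\<Sum>I\<in>Tv. P I) - real (card Tv) * m ^ k)"
      by (simp add: sum.distrib sum_distrib_left sum_distrib_right sum_subtractf algebra_simps)
    finally show ?thesis using dsum Esum cardTv by (simp add: C_def)
  qed
  let ?W = "?V - {v}"
  have fW: "finite ?W" using fV by simp
  have cW: "card ?W = n - 1" using cV v fV by simp
  have Wne: "?W \<noteq> {}"
  proof -
    have "card ?W > 0" using cW nk by simp
    then show ?thesis using card_gt_0_iff by blast
  qed
  have xW: "\<And>i. i \<in> ?W \<Longrightarrow> 0 < x i" using m_le mpos by (meson DiffD1 less_le_trans)
  define S where "S = (\<Sum>i\<in>?W. x i)"
  have S0: "S \<ge> 0" unfolding S_def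
  proof (rule sum_nonneg)
    fix i assume "i \<in> ?W" then show "0 \<le> x i" using xW[of i] by simp
  qed
  have Ek: "fact k * E \<le> S ^ k" unfolding E_def S_def
    by (rule esym_le_pow[OF fW]) (use xW in \<open>simp add: less_imp_le\<close>)
  have SW1: "(\<Sum>i\<in>?W. x i powr p) \<le> 1"
  proof -
    have "(\<Sum>i\<in>?W. x i powr p) \<le> (\<Sum>i\<in>?V. x i powr p)" by (rule sum_mono2[OF fV]) auto
    then show ?thesis using sum1 by simp
  qed
  define \<nu> where "\<nu> = real n powr (1 / p)"
  define \<omega> where "\<omega> = \<mu> powr (1 / p)"
  have nu0: "\<nu> > 0" using n0 by (simp add: \<nu>_def)
  have om0: "\<omega> > 0" using mu0 by (simp add: \<omega>_def)
  have m_eq: "m = \<omega> / \<nu>"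
  proof -
    have "m = (m powr p) powr (1 / p)" using mpos p0 by (simp add: powr_powr)
    also have "m powr p = \<mu> / real n" using n0 by (simp add: \<mu>_def)
    also have "(\<mu> / real n) powr (1 / p) = \<omega> / \<nu>" by (simp add: \<omega>_def \<nu>_def powr_divide)
    finally show ?thesis .
  qed
  have X_eq: "X = 1 / \<omega>" by (simp add: X_def \<omega>_def powr_minus divide_inverse powr_minus_divide)
  have n_eq: "real n = \<nu> powr p" using n0 p0 by (simp add: \<nu>_def powr_powr)
  have SnXm: "S \<le> real n * X * m"
  proof -
    have "S \<le> real (card ?W) * ((\<Sum>i\<in>?W. x i powr p) / real (card ?W)) powr (1 / p)"
      unfolding S_def by (rule power_mean[OF _ fW Wne xW]) (use p in simp)
    also have "\<dots> \<le> real (card ?W) * (1 / real (card ?W)) powr (1 / p)"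
      using SW1 p0 Wne fW by (intro mult_left_mono powr_mono2 divide_right_mono) (auto simp: sum_nonneg)
    also have "real (card ?W) * (1 / real (card ?W)) powr (1 / p) = real (card ?W) powr (1 - 1 / p)"
    proof -
      have cw0: "real (card ?W) > 0" using cW nk by simp
      have "real (card ?W) * (1 / real (card ?W)) powr (1 / p) = real (card ?W) / real (card ?W) powr (1 / p)"
        using cw0 by (simp add: powr_divide)
      also have "\<dots> = real (card ?W) powr (1 - 1 / p)" using cw0 by (simp add: powr_diff)
      finally show ?thesis .
    qed
    also have "\<dots> \<le> real n powr (1 - 1 / p)" using cW p by (intro powr_mono2) auto
    also have "real n powr (1 - 1 / p) = real n * X * m"
    proof -
      have "real n * X * m = real n * (1 / \<omega>) * (\<omega> / \<nu>)" using X_eq m_eq by simp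
      also have "\<dots> = real n / \<nu>" using om0 by simp
      also have "\<dots> = real n powr (1 - 1 / p)" using n0 by (simp add: \<nu>_def powr_diff)
      finally show ?thesis by simp
    qed
    finally show ?thesis .
  qed
  have Ebound: "E \<le> real n ^ k * X ^ k * m ^ k / fact k"
  proof -
    have "S ^ k \<le> (real n * X * m) ^ k" using S0 SnXm by (intro power_mono) auto
    then have "fact k * E \<le> real n ^ k * X ^ k * m ^ k" using Ek by (simp add: power_mult_distrib)
    then show ?thesis by (simp add: field_simps)
  qed
  have binom: "real ?s * real (n choose ?s) = real n * C"
    using binomial_absorption[of k n] unfolding C_def by (metis of_nat_mult)
  have Z: "real n * real n powr (- real ?s / p) * m powr (p - 1) = \<mu> * X ^ ?s * m ^ k"
  proof -
    have a1: "real n powr (- real ?s / p) = 1 / \<nu> ^ ?s"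
    proof -
      have "real n powr (- real ?s / p) = (real n powr (1 / p)) powr (- real ?s)"
        by (simp add: powr_powr)
      also have "\<dots> = inverse (\<nu> powr (real ?s))" unfolding \<nu>_def by (rule powr_minus)
      also have "\<dots> = 1 / \<nu> powr (real ?s)" by (simp add: divide_inverse)
      also have "\<nu> powr (real ?s) = \<nu> ^ ?s" using nu0 by (rule powr_realpow)
      finally show ?thesis .
    qed
    have a2: "m powr (p - 1) = (\<mu> / real n) / m"
    proof -
      have "m powr (p - 1) = m powr p / m" using mpos by (simp add: powr_diff)
      also have "m powr p = \<mu> / real n" using n0 by (simp add: \<mu>_def)
      finally show ?thesis .
    qed
    have "real n * real n powr (- real ?s / p) * m powr (p - 1) = real n * (1 / \<nu> ^ ?s) * ((\<mu> / real n) / m)"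
      by (simp only: a1 a2)
    also have "\<dots> = \<mu> / (\<nu> ^ ?s * m)" using n0 mpos nu0 by (simp add: field_simps)
    also have "\<dots> = \<mu> / (\<nu> ^ k * \<omega>)" using m_eq nu0 om0 by (simp add: field_simps)
    also have "\<dots> = \<mu> * X ^ ?s * m ^ k"
    proof -
      have "(1 / \<omega>) * (\<omega> / \<nu>) = 1 / \<nu>" using om0 by simp
      then have pw: "(1 / \<omega>) ^ k * (\<omega> / \<nu>) ^ k = (1 / \<nu>) ^ k" by (metis power_mult_distrib)
      have "\<mu> * X ^ ?s * m ^ k = \<mu> * (1 / \<omega>) ^ (Suc k) * (\<omega> / \<nu>) ^ k" by (simp only: X_eq m_eq)
      also have "\<dots> = \<mu> * (1 / \<omega>) * ((1 / \<omega>) ^ k * (\<omega> / \<nu>) ^ k)" by simp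
      also have "\<dots> = \<mu> * (1 / \<omega>) * (1 / \<nu>) ^ k" by (simp only: pw)
      also have "\<dots> = \<mu> / (\<nu> ^ k * \<omega>)" by (simp add: power_divide)
      finally show ?thesis by simp
    qed
    finally show ?thesis .
  qed
  have A0: "A > 0" by (simp add: A_def)
  have main: "real ?s * (A * pi * real (n choose ?s) * real n powr (- real ?s / p)) * m powr (p - 1)
      \<le> A * (real (Qdeg Q H v) * m ^ k + c * (E - C * m ^ k))"
    using Blow Bdef up A0 by (smt (verit) mult_left_mono)
  have lhs: "real ?s * (A * pi * real (n choose ?s) * real n powr (- real ?s / p)) * m powr (p - 1)
      = A * (pi * C * \<mu> * X ^ ?s * m ^ k)"
  proof -
    have "real ?s * (A * pi * real (n choose ?s) * real n powr (- real ?s / p)) * m powr (p - 1)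
        = A * pi * (real ?s * real (n choose ?s)) * (real n powr (- real ?s / p) * m powr (p - 1))"
      by (simp add: algebra_simps)
    also have "\<dots> = A * pi * C * (real n * real n powr (- real ?s / p) * m powr (p - 1))"
      using binom by (simp add: algebra_simps)
    also have "\<dots> = A * (pi * C * \<mu> * X ^ ?s * m ^ k)" using Z by (simp add: algebra_simps)
    finally show ?thesis .
  qed
  have "pi * C * \<mu> * X ^ ?s * m ^ k \<le> real (Qdeg Q H v) * m ^ k + c * (E - C * m ^ k)"
    using mult_left_le_imp_le[OF main[unfolded lhs] A0] .
  also have "\<dots> \<le> real (Qdeg Q H v) * m ^ k + c * (real n ^ k * X ^ k * m ^ k / fact k - C * m ^ k)"
  proof -
    have c0: "c \<ge> 0" by (simp add: c_def cQ_def)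
    show ?thesis using Ebound c0 by (intro add_left_mono mult_left_mono) auto
  qed
  finally have ineq: "pi * C * \<mu> * X ^ ?s * m ^ k \<le>
      (real (Qdeg Q H v) + c * (real n ^ k * X ^ k / fact k - C)) * m ^ k"
    by (simp add: algebra_simps)
  have mk0: "m ^ k > 0" using mpos by simp
  have "pi * C * \<mu> * X ^ ?s \<le> real (Qdeg Q H v) + c * (real n ^ k * X ^ k / fact k - C)"
    using ineq mk0 by (simp add: mult_le_cancel_right_pos)
  then have "C * (pi * \<mu> * X ^ (k + 1) - c * (X ^ k - 1)) - c * X ^ k * (real n ^ k / fact k - C)
      \<le> real (Qdeg Q H v)"
    by (simp add: algebra_simps)
  then show ?thesis by (simp add: C_def c_def X_def \<mu>_def m_def)
qed


lemma mu_props: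
  fixes p e' :: real
  assumes p: "p > 1" and fH: "fst H = {..<n}" and n1: "1 \<le> n" and pe: "principal_eigvec p Q H x"
    and xm: "(1 - e') / real n \<le> xmin H x powr p" and e'1: "e' < 1"
  shows "0 < real n * xmin H x powr p" "real n * xmin H x powr p \<le> 1" "1 - e' \<le> real n * xmin H x powr p"
proof -
  let ?V = "fst H"
  define m where "m = xmin H x"
  have p0: "p > 0" using p by simp
  have fV: "finite ?V" using fH by simp
  have cV: "card ?V = n" using fH by simp
  have "0 \<in> ?V" using fH n1 by simp
  then have Vne: "?V \<noteq> {}" by blast
  have n0: "real n > 0" using n1 by simp
  have x0: "\<forall>i\<in>?V. 0 \<le> x i" and xn: "pnorm p ?V x = 1"
    using pe by (auto simp: principal_eigvec_def)
  have m_le: "\<And>i. i \<in> ?V \<Longrightarrow> m \<le> x i" unfolding m_def xmin_def using fV by simp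
  have m0: "m \<ge> 0" using Min_in[of "x ` ?V"] fV Vne x0 unfolding m_def xmin_def by fastforce
  have "(1 - e') / real n > 0" using e'1 n0 by simp
  then have mp: "m powr p > 0" using xm unfolding m_def by linarith
  then show "0 < real n * xmin H x powr p" using n0 by (simp add: m_def)
  have sum1: "(\<Sum>i\<in>?V. x i powr p) = 1"
  proof -
    have "(\<Sum>i\<in>?V. \<bar>x i\<bar> powr p) = 1" using xn pnorm_one_iff[OF p0] by simp
    moreover have "(\<Sum>i\<in>?V. \<bar>x i\<bar> powr p) = (\<Sum>i\<in>?V. x i powr p)" using x0 by (intro sum.cong) auto
    ultimately show ?thesis by simp
  qed
  have "(\<Sum>i\<in>?V. m powr p) \<le> (\<Sum>i\<in>?V. x i powr p)"
    using m_le m0 p0 by (intro sum_mono powr_mono2) auto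
  then show "real n * xmin H x powr p \<le> 1" using sum1 cV by (simp add: m_def)
  show "1 - e' \<le> real n * xmin H x powr p" using xm n0 by (simp add: divide_le_eq mult.commute)
qed

lemma X_props:
  fixes p \<mu> :: real
  assumes p: "p > 1" and mu0: "0 < \<mu>" and mu1: "\<mu> \<le> 1"
  shows "1 \<le> \<mu> powr (- 1 / p)" "\<mu> * \<mu> powr (- 1 / p) \<le> 1" "\<mu> powr (- 1 / p) \<le> 1 / \<mu>"
proof -
  have p0: "p > 0" using p by simp
  have "\<mu> powr 0 \<le> \<mu> powr (- 1 / p)" using mu0 mu1 p0 by (intro powr_mono') auto
  then show "1 \<le> \<mu> powr (- 1 / p)" using mu0 by simp
  have "\<mu> powr (1 + - 1 / p) = \<mu> powr 1 * \<mu> powr (- 1 / p)" by (rule powr_add)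
  then have "\<mu> * \<mu> powr (- 1 / p) = \<mu> powr (1 + - 1 / p)" using mu0 by simp
  also have "\<dots> \<le> \<mu> powr 0" using mu0 mu1 p by (intro powr_mono') (auto simp: field_simps)
  finally show "\<mu> * \<mu> powr (- 1 / p) \<le> 1" using mu0 by simp
  have "\<mu> powr (- 1 / p) \<le> \<mu> powr (- 1)" using mu0 mu1 p by (intro powr_mono') (auto simp: field_simps)
  then show "\<mu> powr (- 1 / p) \<le> 1 / \<mu>" using mu0 by (simp add: powr_minus divide_inverse)
qed

lemma final_arith:
  fixes D C' Cn Y Xk K c t e e1 pi Nk :: real and k :: nat
  assumes D: "C' * Y - c * Xk * (Nk - C') \<le> D" and Y: "(1 - e1) * pi \<le> Y"
    and Xk: "Xk \<le> K" and c0: "c \<ge> 0" and K0: "K \<ge> 0" and C'0: "C' \<ge> 0" and NkC: "C' \<le> Nk"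
    and C'eq: "C' = t * Cn" and Nkt: "Nk * t ^ k \<le> Cn" and t0: "t > 0" and Cn0: "Cn \<ge> 0"
    and phi: "(1 - e) * pi < ((1 - e1) * pi + c * K) * t - c * K * (1 / t) ^ k"
  shows "(1 - e) * pi * Cn \<le> D"
proof -
  have "C' * ((1 - e1) * pi) \<le> C' * Y" using Y C'0 by (rule mult_left_mono)
  moreover have "c * Xk * (Nk - C') \<le> c * K * (Nk - C')"
    using Xk c0 NkC by (intro mult_right_mono mult_left_mono) auto
  ultimately have D1: "C' * ((1 - e1) * pi) - c * K * (Nk - C') \<le> D" using D by linarith
  have tk: "t ^ k > 0" using t0 by simp
  have Nk: "Nk \<le> Cn * (1 / t) ^ k" using Nkt tk by (simp add: field_simps power_divide)
  have cK0: "c * K \<ge> 0" using c0 K0 by simp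
  have "c * K * Nk \<le> c * K * (Cn * (1 / t) ^ k)" using Nk cK0 by (rule mult_left_mono)
  then have D2: "t * Cn * ((1 - e1) * pi) - c * K * (Cn * (1 / t) ^ k) + c * K * (t * Cn) \<le> D"
    using D1 C'eq by (simp add: algebra_simps)
  have "(1 - e) * pi * Cn \<le> (((1 - e1) * pi + c * K) * t - c * K * (1 / t) ^ k) * Cn"
    using phi Cn0 by (intro mult_right_mono) auto
  also have "\<dots> = t * Cn * ((1 - e1) * pi) - c * K * (Cn * (1 / t) ^ k) + c * K * (t * Cn)"
    by (simp add: algebra_simps)
  finally show ?thesis using D2 by linarith
qed


lemma aux_half: "(q::real) < e \<Longrightarrow> q < (e + q) / 2" by simp

theorem lemma4p2:
  fixes p \<epsilon> \<epsilon>' :: real and r s :: nat and Q :: hgraph and P :: "hgraph set"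
  assumes "p > 1" and "2 \<le> r" and "r \<le> s" and "0 < \<epsilon>" and "\<epsilon> < 1"
    and "is_rgraph r Q" and "card (fst Q) = s"
    and "hereditary r P"
    and "piQ Q P > 0"
    and "0 \<le> \<epsilon>'" and "\<epsilon>' < \<epsilon> * piQ Q P / (fact s * (real s - 1))"
  shows "\<exists>N. \<forall>n\<ge>N. \<forall>H x. H \<in> Pn P n \<longrightarrow> lamQ p Q H = lamQ_prop p Q P n \<longrightarrow>
            principal_eigvec p Q H x \<longrightarrow> xmin H x powr p \<ge> (1 - \<epsilon>') / real n \<longrightarrow>
            real (min_Qdeg Q H) \<ge> (1 - \<epsilon>) * piQ Q P * real (n choose (s - 1))"
proof (cases "P = {}")
  case True
  then show ?thesis by (intro exI[of _ 0]) (simp add: Pn_def)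
next
  case False
  note p = assms(1) and r2 = assms(2) and rs = assms(3) and ep0 = assms(4) and ep1 = assms(5)
    and Q = assms(6) and sQ = assms(7) and her = assms(8) and pi0' = assms(9) and e'0 = assms(10)
    and th0 = assms(11)
  obtain H1 where H1: "H1 \<in> P" using False by blast
  define k where "k = s - 1"
  have sk: "s = Suc k" using r2 rs by (simp add: k_def)
  have k1: "k \<ge> 1" using r2 rs by (simp add: k_def)
  define pi where "pi = piQ Q P"
  define c where "c = cQ Q"
  define A where "A = (fact s :: real)"
  have pi0: "pi > 0" using pi0' by (simp add: pi_def)
  have fQ: "finite (fst Q)" using Q by (simp add: is_rgraph_def)
  have pi_ex: "\<And>n. s \<le> n \<Longrightarrow> pi * real (n choose s) \<le> real (exQ Q P n)"
    using piQ_props(1)[OF her r2 H1 Q] sQ by (simp add: pi_def)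
  have pic: "pi \<le> c" using piQ_props(2)[OF her r2 H1 Q] by (simp add: pi_def c_def)
  have cA: "c \<le> A" using cQ_le_fact[of Q] sQ by (simp add: c_def A_def)
  have k1c: "k = 1 \<Longrightarrow> 2 * c \<le> A" using sQ sk by (simp add: c_def A_def cQ_def)
  have Ak0: "A * real k > 0" using k1 by (simp add: A_def)
  have th: "A * real k * \<epsilon>' < \<epsilon> * pi"
  proof -
    have "real s - 1 = real k" using sk by simp
    then have "\<epsilon>' < \<epsilon> * pi / (A * real k)" using th0 by (simp add: pi_def A_def)
    then show ?thesis using Ak0 by (simp add: field_simps)
  qed
  define \<epsilon>1 where "\<epsilon>1 = (\<epsilon> + A * real k * \<epsilon>' / pi) / 2"
  have q0: "A * real k * \<epsilon>' / pi \<ge> 0" using Ak0 e'0 pi0 by simp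
  have qlt: "A * real k * \<epsilon>' / pi < \<epsilon>" using th pi0 by (simp add: divide_less_eq)
  have e1pos: "0 < \<epsilon>1" using ep0 q0 by (simp add: \<epsilon>1_def)
  have e1lt: "\<epsilon>1 < \<epsilon>" using qlt by (simp add: \<epsilon>1_def)
  have e1le1: "\<epsilon>1 \<le> 1" using e1lt ep1 by simp
  have th1: "A * real k * \<epsilon>' < \<epsilon>1 * pi"
  proof -
    have "A * real k * \<epsilon>' / pi < (\<epsilon> + A * real k * \<epsilon>' / pi) / 2" using qlt by (rule aux_half)
    then have "A * real k * \<epsilon>' / pi < \<epsilon>1" by (simp only: \<epsilon>1_def)
    then show ?thesis using pi0 by (simp add: divide_less_eq)
  qed
  have e'1: "\<epsilon>' < 1"
  proof -
    have "\<epsilon> * pi \<le> \<epsilon> * A" using pic cA ep0 by simp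
    then have "A * (real k * \<epsilon>') < A * \<epsilon>" using th by (simp add: algebra_simps)
    then have "real k * \<epsilon>' < \<epsilon>" using Ak0 by (simp add: mult_less_cancel_left_pos A_def)
    moreover have "\<epsilon>' \<le> real k * \<epsilon>'" using k1 e'0 by (simp add: mult_le_cancel_right1)
    ultimately show ?thesis using ep1 by simp
  qed
  define K where "K = (1 / (1 - \<epsilon>')) ^ k"
  have K0: "K \<ge> 0" using e'1 by (simp add: K_def)
  have c0: "c \<ge> 0" by (simp add: c_def cQ_def)
  define \<phi> where "\<phi> t = ((1 - \<epsilon>1) * pi + c * K) * t - c * K * (1 / t) ^ k" for t :: real
  have tlim: "(\<lambda>n. 1 - real k / real n) \<longlonglongrightarrow> 1"
    using tendsto_diff[OF tendsto_const[of "1::real"] lim_const_over_n[of "real k"]] by simp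
  have plim: "(\<lambda>n. \<phi> (1 - real k / real n)) \<longlonglongrightarrow> \<phi> 1"
    unfolding \<phi>_def by (intro tendsto_intros tlim) simp
  have phi1: "\<phi> 1 = (1 - \<epsilon>1) * pi" by (simp add: \<phi>_def)
  have "(1 - \<epsilon>) * pi < \<phi> 1" using phi1 e1lt pi0 by simp
  then have "eventually (\<lambda>n. (1 - \<epsilon>) * pi < \<phi> (1 - real k / real n)) sequentially"
    by (rule order_tendstoD(1)[OF plim])
  then obtain N1 where N1: "\<And>n. n \<ge> N1 \<Longrightarrow> (1 - \<epsilon>) * pi < \<phi> (1 - real k / real n)"
    unfolding eventually_sequentially by blast
  show ?thesis
  proof (intro exI[of _ "max N1 (s + 1)"] allI impI)
    fix n H x
    assume n: "max N1 (s + 1) \<le> n" and H: "H \<in> Pn P n" and lamH: "lamQ p Q H = lamQ_prop p Q P n"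
      and pe: "principal_eigvec p Q H x" and xm: "(1 - \<epsilon>') / real n \<le> xmin H x powr p"
    have nN1: "n \<ge> N1" and ns: "n \<ge> s + 1" using n by auto
    have nk: "Suc (Suc k) \<le> n" using ns sk by simp
    have fH: "fst H = {..<n}" using H by (simp add: Pn_def)
    have n1: "1 \<le> n" using nk by simp
    have n0: "real n > 0" using n1 by simp
    have lamb: "fact (Suc k) * pi * real (n choose Suc k) * real n powr (- real (Suc k) / p) \<le> lamQ p Q H"
    proof -
      have "fact s * (pi * real (n choose s)) * real n powr (- real s / p)
          \<le> fact s * real (exQ Q P n) * real n powr (- real s / p)"
        using pi_ex[of n] ns by (intro mult_right_mono mult_left_mono) auto
      also have "\<dots> \<le> lamQ_prop p Q P n"
        using lamQ_prop_ge[OF her r2 H1 _ fQ n1, of p] p sQ by simp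
      finally show ?thesis using lamH sk by (simp add: algebra_simps)
    qed
    define \<mu> where "\<mu> = real n * xmin H x powr p"
    define X where "X = \<mu> powr (- 1 / p)"
    have mu: "0 < \<mu>" "\<mu> \<le> 1" "1 - \<epsilon>' \<le> \<mu>"
      using mu_props[OF p fH n1 pe xm e'1] by (simp_all add: \<mu>_def)
    have Xp: "1 \<le> X" "\<mu> * X \<le> 1" "X \<le> 1 / \<mu>"
      using X_props[OF p mu(1) mu(2)] by (simp_all add: X_def)
    have Y: "(1 - \<epsilon>1) * pi \<le> pi * \<mu> * X ^ (k + 1) - c * (X ^ k - 1)"
    proof -
      have "(1 - \<epsilon>1) * pi \<le> pi * (1 - (1 - \<mu>)) * X ^ (k + 1) - c * (X ^ k - 1)"
      proof (rule core_ineq[OF k1 pi0 pic cA e1pos e1le1])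
        show "0 \<le> 1 - \<mu>" using mu by simp
        have "A * real k * (1 - \<mu>) \<le> A * real k * \<epsilon>'" using mu Ak0 by (intro mult_left_mono) auto
        then show "A * real k * (1 - \<mu>) < \<epsilon>1 * pi" using th1 by simp
        show "k = 1 \<Longrightarrow> 2 * c \<le> A" by (rule k1c)
        show "1 \<le> X" by (rule Xp(1))
        show "(1 - (1 - \<mu>)) * X \<le> 1" using Xp(2) by simp
      qed
      then show ?thesis by simp
    qed
    have XK: "X ^ k \<le> K"
    proof -
      have "1 / \<mu> \<le> 1 / (1 - \<epsilon>')" using mu e'1 by (intro divide_left_mono) auto
      then have "X \<le> 1 / (1 - \<epsilon>')" using Xp(3) by simp
      then show ?thesis unfolding K_def using Xp(1) by (intro power_mono) auto
    qed
    define C' where "C' = real (n - 1 choose k)"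
    define Cn where "Cn = real (n choose k)"
    define Nk where "Nk = real n ^ k / fact k"
    define t where "t = 1 - real k / real n"
    have t0: "t > 0" using nk n0 by (simp add: t_def field_simps)
    have C'0: "C' \<ge> 0" by (simp add: C'_def)
    have Cn0: "Cn \<ge> 0" by (simp add: Cn_def)
    have NkC: "C' \<le> Nk"
    proof -
      have "real ((n - 1 choose k) * fact k) \<le> real ((n - 1) ^ k)" by (rule of_nat_mono[OF binomial_fact_pow])
      also have "\<dots> \<le> real n ^ k" by (simp add: power_mono)
      finally have "C' * fact k \<le> real n ^ k" by (simp add: C'_def)
      then show ?thesis by (simp add: Nk_def field_simps)
    qed
    have C'eq: "C' = t * Cn"
    proof -
      have "(n - k) * (n choose k) = n * ((n - 1) choose k)" by (rule binomial_absorb_comp)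
      then have "real (n - k) * Cn = real n * C'" unfolding Cn_def C'_def by (metis of_nat_mult)
      moreover have "real (n - k) = real n - real k" using nk by simp
      ultimately have "(real n - real k) * Cn = real n * C'" by simp
      then show ?thesis using n0 by (simp add: t_def field_simps)
    qed
    have Nkt: "Nk * t ^ k \<le> Cn"
    proof -
      have "real (n - k) ^ k \<le> fact k * Cn" using fact_binom_lower[of k n] nk by (simp add: Cn_def)
      moreover have "real (n - k) = real n * t" using nk n0 by (simp add: t_def field_simps)
      ultimately have "(real n * t) ^ k \<le> fact k * Cn" by simp
      then show ?thesis by (simp add: Nk_def power_mult_distrib field_simps)
    qed
    have phi: "(1 - \<epsilon>) * pi < ((1 - \<epsilon>1) * pi + c * K) * t - c * K * (1 / t) ^ k"
      using N1[OF nN1] by (simp add: \<phi>_def t_def)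
    have degv: "(1 - \<epsilon>) * pi * Cn \<le> real (Qdeg Q H v)" if v: "v \<in> fst H" for v
    proof -
      have D: "C' * (pi * \<mu> * X ^ (k + 1) - c * (X ^ k - 1)) - c * X ^ k * (Nk - C') \<le> real (Qdeg Q H v)"
        using degree_bound[OF p Q r2 _ fH nk lamb pi0 pe xm e'1 v] sQ sk
        by (simp add: C'_def c_def X_def \<mu>_def Nk_def)
      show ?thesis
        by (rule final_arith[OF D Y XK c0 K0 C'0 NkC C'eq Nkt t0 Cn0 phi])
    qed
    have fV: "finite (fst H)" using fH by simp
    have "0 \<in> fst H" using fH n1 by simp
    then have Vne: "fst H \<noteq> {}" by blast
    have "min_Qdeg Q H \<in> Qdeg Q H ` fst H" unfolding min_Qdeg_def using fV Vne by (intro Min_in) auto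
    then obtain v where v: "v \<in> fst H" and mv: "min_Qdeg Q H = Qdeg Q H v" by auto
    have "s - 1 = k" by (simp add: k_def)
    then show "(1 - \<epsilon>) * piQ Q P * real (n choose (s - 1)) \<le> real (min_Qdeg Q H)"
      using degv[OF v] mv by (simp add: pi_def Cn_def)
  qed
qed


end
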